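(* For every integer $B\ge3$, the risk $R(\mu)=\mathbb E\|\eta^{JS}(\mu+\mathbf Z)-\mu\|_2^2$, $\mu\in\mathbb R^B$, $\mathbf Z\sim\mathsf N(0,I_{B\times B})$, depends on $\mu$ only through $\|\mu\|_2$ and is a nondecreasing function of $\|\mu\|_2\in[0,\infty)$.
   Context: The positive-part James–Stein denoiser on $\mathbb R^B$ is $\eta^{JS}(y)=\big(1-(B-2)/\|y\|_2^2\big)_+\,y$. *)

theory Defs
  imports "HOL-Probability.Probability"
begin

text \<open>Positive-part James--Stein denoiser on R^B, B = CARD('n).
  Note: at y = 0 the HOL convention x/0 = 0 gives value 0, which is immaterial.\<close>
definition js :: "real ^ 'n \<Rightarrow> real ^ 'n" where
  "js y = max 0 (1 - (real CARD('n) - 2) / (norm y)\<^sup>2) *\<^sub>R y"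

definition std_gauss :: "(real ^ 'n) measure" where
  "std_gauss = density lborel (\<lambda>z. ennreal (\<Prod>i\<in>UNIV. std_normal_density (z $ i)))"

definition js_risk :: "real ^ 'n \<Rightarrow> real" where
  "js_risk \<mu> = (\<integral>z. (norm (js (\<mu> + z) - \<mu>))\<^sup>2 \<partial>std_gauss)"

end

theory Submission
  imports Defs "HOL-Real_Asymp.Real_Asymp"
begin


lemma det_shear_fin:
  fixes m n :: "'n::finite"
  assumes "m \<noteq> n"
  shows "det (matrix (\<lambda>v::(real, 'n) vec. \<chi> i. if i = m then v $ m + v $ n else v $ i)) = 1"
proof -
  have "matrix (\<lambda>v::(real, 'n) vec. \<chi> i. if i = m then v $ m + v $ n else v $ i)
      = (\<chi> k. if k = m then row m (mat 1) + 1 *s row n (mat 1) else row k (mat 1 :: real^'n^'n))"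
    by (auto simp: matrix_def row_def mat_def axis_def vec_eq_iff)
  then show ?thesis
    using det_row_operation[OF assms, of "mat 1 :: real^'n^'n" 1] by simp
qed

proposition
 fixes f :: "real^'n::finite \<Rightarrow> real^'n"
  assumes "linear f" "S \<in> lmeasurable"
  shows measurable_linear_image_fin: "(f ` S) \<in> lmeasurable"
    and measure_linear_image_fin: "measure lebesgue (f ` S) = \<bar>det (matrix f)\<bar> * measure lebesgue S" (is "?Q f S")
proof -
  have "\<forall>S \<in> lmeasurable. (f ` S) \<in> lmeasurable \<and> ?Q f S"
  proof (rule induct_linear_elementary [OF \<open>linear f\<close>]; intro ballI)
    fix f g and S :: "(real,'n) vec set"
    assume "linear f" and "linear g"
      and f [rule_format]: "\<forall>S \<in> lmeasurable. f ` S \<in> lmeasurable \<and> ?Q f S"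
      and g [rule_format]: "\<forall>S \<in> lmeasurable. g ` S \<in> lmeasurable \<and> ?Q g S"
      and S: "S \<in> lmeasurable"
    then have gS: "g ` S \<in> lmeasurable"
      by blast
    show "(f \<circ> g) ` S \<in> lmeasurable \<and> ?Q (f \<circ> g) S"
      using f [OF gS] g [OF S] matrix_compose [OF \<open>linear g\<close> \<open>linear f\<close>]
      by (simp add: o_def image_comp abs_mult det_mul)
  next
    fix f :: "real^'n::_ \<Rightarrow> real^'n::_" and i and S :: "(real^'n::_) set"
    assume "linear f" and 0: "\<And>x. f x $ i = 0" and "S \<in> lmeasurable"
    then have "\<not> inj f"
      by (metis (full_types) linear_injective_imp_surjective one_neq_zero surjE vec_component)
    have detf: "det (matrix f) = 0"
      using \<open>\<not> inj f\<close> det_nz_iff_inj[OF \<open>linear f\<close>] by blast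
    show "f ` S \<in> lmeasurable \<and> ?Q f S"
    proof
      show "f ` S \<in> lmeasurable"
        using lmeasurable_iff_indicator_has_integral \<open>linear f\<close> \<open>\<not> inj f\<close> negligible_UNIV negligible_linear_singular_image by blast
      have "measure lebesgue (f ` S) = 0"
        by (meson \<open>\<not> inj f\<close> \<open>linear f\<close> negligible_imp_measure0 negligible_linear_singular_image)
      also have "\<dots> = \<bar>det (matrix f)\<bar> * measure lebesgue S"
        by (simp add: detf)
      finally show "?Q f S" .
    qed
  next
    fix c and S :: "(real^'n::_) set"
    assume "S \<in> lmeasurable"
    show "(\<lambda>a. \<chi> i. c i * a $ i) ` S \<in> lmeasurable \<and> ?Q (\<lambda>a. \<chi> i. c i * a $ i) S"
    proof
      show "(\<lambda>a. \<chi> i. c i * a $ i) ` S \<in> lmeasurable"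
        by (simp add: \<open>S \<in> lmeasurable\<close> measurable_stretch)
      show "?Q (\<lambda>a. \<chi> i. c i * a $ i) S"
        by (simp add: measure_stretch [OF \<open>S \<in> lmeasurable\<close>, of c] axis_def matrix_def det_diagonal)
    qed
  next
    fix m :: "'n" and n :: "'n" and S :: "(real, 'n) vec set"
    assume "m \<noteq> n" and "S \<in> lmeasurable"
    let ?h = "\<lambda>v::(real, 'n) vec. \<chi> i. v $ Transposition.transpose m n i"
    have lin: "linear ?h"
      by (rule linearI) (simp_all add: plus_vec_def scaleR_vec_def)
    have meq: "measure lebesgue ((\<lambda>v::(real, 'n) vec. \<chi> i. v $ Transposition.transpose m n i) ` cbox a b)
             = measure lebesgue (cbox a b)" for a b
    proof (cases "cbox a b = {}")
      case True then show ?thesis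
        by simp
    next
      case False
      then have him: "?h ` (cbox a b) \<noteq> {}"
        by blast
      have eq: "?h ` (cbox a b) = cbox (?h a) (?h b)"
        by (auto simp: image_iff lambda_swap_Galois mem_box_cart) (metis transpose_involutory)+
      show ?thesis
        using him prod.permute [OF permutes_swap_id, where S=UNIV and g="\<lambda>i. (b - a)$i", symmetric]
        by (simp add: eq content_cbox_cart False)
    qed
    have "(\<chi> i j. if Transposition.transpose m n i = j then 1 else 0) = (\<chi> i j. if j = Transposition.transpose m n i then 1 else (0::real))"
      by (auto intro!: Cart_lambda_cong)
    then have "matrix ?h = transpose(\<chi> i j. mat 1 $ i $ Transposition.transpose m n j)"
      by (auto simp: matrix_eq transpose_def axis_def mat_def matrix_def)
    then have 1: "\<bar>det (matrix ?h)\<bar> = 1"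
      by (simp add: det_permute_columns permutes_swap_id sign_swap_id abs_mult)
    show "?h ` S \<in> lmeasurable \<and> ?Q ?h S"
      using measure_linear_sufficient [OF lin \<open>S \<in> lmeasurable\<close>] meq 1 by force
  next
    fix m n :: "'n" and S :: "(real, 'n) vec set"
    assume "m \<noteq> n" and "S \<in> lmeasurable"
    let ?h = "\<lambda>v::(real, 'n) vec. \<chi> i. if i = m then v $ m + v $ n else v $ i"
    have lin: "linear ?h"
      by (rule linearI) (auto simp: algebra_simps plus_vec_def scaleR_vec_def vec_eq_iff)
    have 1: "det(matrix ?h) = 1"
      by (rule det_shear_fin[OF \<open>m \<noteq> n\<close>])
    have meq: "measure lebesgue (?h ` (cbox a b)) = measure lebesgue (cbox a b)" for a b
    proof (cases "cbox a b = {}")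
      case True then show ?thesis by simp
    next
      case False
      then have ne: "(+) (\<chi> i. if i = n then - a $ n else 0) ` cbox a b \<noteq> {}"
        by auto
      let ?v = "\<chi> i. if i = n then - a $ n else 0"
      have "?h ` cbox a b
            = (+) (\<chi> i. if i = m \<or> i = n then a $ n else 0) ` ?h ` (+) ?v ` (cbox a b)"
        using \<open>m \<noteq> n\<close> unfolding image_comp o_def by (force simp: vec_eq_iff)
      then have "measure lebesgue (?h ` (cbox a b))
               = measure lebesgue ((\<lambda>v. \<chi> i. if i = m then v $ m + v $ n else v $ i) `
                                   (+) ?v ` cbox a b)"
        by (rule ssubst) (rule measure_translation)
      also have "\<dots> = measure lebesgue ((\<lambda>v. \<chi> i. if i = m then v $ m + v $ n else v $ i) ` cbox (?v +a) (?v + b))"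
        by (metis (no_types, lifting) cbox_translation)
      also have "\<dots> = measure lebesgue ((+) ?v ` cbox a b)"
        apply (subst measure_shear_interval)
        using \<open>m \<noteq> n\<close> ne apply auto
        apply (simp add: cbox_translation)
        by (metis cbox_borel cbox_translation measure_completion sets_lborel)
      also have "\<dots> = measure lebesgue (cbox a b)"
        by (rule measure_translation)
        finally show ?thesis .
      qed
    show "?h ` S \<in> lmeasurable \<and> ?Q ?h S"
      using measure_linear_sufficient [OF lin \<open>S \<in> lmeasurable\<close>] meq 1 by force
  qed
  with assms show "(f ` S) \<in> lmeasurable" "?Q f S"
    by metis+
qed


lemma orth_measurable:
  fixes Q :: "real^'n::finite \<Rightarrow> real^'n"
  assumes Q: "orthogonal_transformation Q"
  shows "Q \<in> borel_measurable borel"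
  by (intro borel_measurable_continuous_onI linear_continuous_on
      orthogonal_transformation_linear[OF Q, THEN linear_conv_bounded_linear[THEN iffD1]])

lemma enn_fin_top: "(x::ennreal) < \<infinity> \<Longrightarrow> x \<noteq> \<top>"
  by auto

lemma orth_lborel:
  fixes Q :: "real^'n::finite \<Rightarrow> real^'n"
  assumes Q: "orthogonal_transformation Q"
  shows "distr lborel borel Q = lborel"
proof (rule lborel_eqI[symmetric])
  fix l u :: "real^'n"
  assume le: "\<And>b. b \<in> Basis \<Longrightarrow> l \<bullet> b \<le> u \<bullet> b"
  have [measurable]: "Q \<in> borel_measurable borel" using Q by (rule orth_measurable)
  let ?Qi = "inv Q"
  have bij: "bij Q" using Q by (rule orthogonal_transformation_bij)
  have pre: "Q -` box l u = ?Qi ` box l u"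
    using bij by (rule bij_vimage_eq_inv_image)
  have oi: "orthogonal_transformation ?Qi" using Q by (rule orthogonal_transformation_inv)
  have lin: "linear ?Qi" using oi by (rule orthogonal_transformation_linear)
  have lb: "box l u \<in> lmeasurable" by simp
  have m: "measure lebesgue (?Qi ` box l u) = measure lebesgue (box l u)"
    using measure_linear_image_fin[OF lin lb] oi by simp
  have "Q -` box l u \<inter> space borel \<in> sets borel"
    by (rule measurable_sets[OF orth_measurable[OF Q]]) (rule borel_open, rule open_box)
  then have Xs: "Q -` box l u \<in> sets lborel" unfolding sets_lborel space_borel by simp
  have bd: "bounded (?Qi ` box l u)"
    using lin bounded_box by (intro bounded_linear_image) (auto simp: linear_conv_bounded_linear)
  have fin: "emeasure lborel (Q -` box l u) \<noteq> top"
  proof -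
    have "emeasure lborel (?Qi ` box l u) < \<infinity>" by (rule emeasure_bounded_finite[OF bd])
    then show ?thesis unfolding pre unfolding infinity_ennreal_def by (rule less_imp_neq)
  qed
  have "emeasure (distr lborel borel Q) (box l u) = emeasure lborel (Q -` box l u)"
    by (simp add: emeasure_distr)
  also have "\<dots> = ennreal (measure lborel (Q -` box l u))"
    using fin by (rule emeasure_eq_ennreal_measure)
  also have "measure lborel (Q -` box l u) = measure lebesgue (Q -` box l u)"
    using Xs by simp
  also have "\<dots> = measure lborel (box l u)"
    unfolding pre m by (rule measure_completion) simp
  also have "ennreal \<dots> = emeasure lborel (box l u)"
    by (rule emeasure_eq_ennreal_measure[symmetric], rule enn_fin_top, rule emeasure_lborel_box_finite)
  also have "\<dots> = (\<Prod>b\<in>Basis. (u - l) \<bullet> b)"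
    using le by (simp add: emeasure_lborel_box_eq)
  finally show "emeasure (distr lborel borel Q) (box l u) = (\<Prod>b\<in>Basis. (u - l) \<bullet> b)" .
qed simp


definition gw :: "real^'n::finite \<Rightarrow> real" where
  "gw z = (\<Prod>i\<in>UNIV. std_normal_density (z $ i))"

lemma norm_sq_vec: "(norm (z::real^'n::finite))^2 = (\<Sum>i\<in>UNIV. (z$i)^2)"
  unfolding power2_norm_eq_inner inner_vec_def by (simp add: power2_eq_square)

lemma gw_norm: "gw (z::real^'n::finite) = (1 / sqrt (2*pi))^CARD('n) * exp (- (norm z)\<^sup>2 / 2)"
proof -
  have "gw z = (\<Prod>i\<in>UNIV. (1 / sqrt (2*pi)) * exp (- (z$i)\<^sup>2 / 2))"
    unfolding gw_def by (simp add: std_normal_density_def)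
  also have "\<dots> = (1 / sqrt (2*pi))^CARD('n) * (\<Prod>i\<in>UNIV. exp (- (z$i)\<^sup>2 / 2))"
    unfolding prod.distrib by simp
  also have "(\<Prod>i\<in>UNIV. exp (- (z$i)\<^sup>2 / 2)) = exp (\<Sum>i\<in>UNIV. - (z$i)\<^sup>2 / 2)"
    by (simp add: exp_sum)
  also have "(\<Sum>i\<in>UNIV. - (z$i)\<^sup>2 / 2) = - (norm z)\<^sup>2 / 2"
    by (simp add: norm_sq_vec sum_divide_distrib sum_negf)
  finally show ?thesis .
qed

lemma gw_nonneg: "0 \<le> gw z"
  unfolding gw_def by (intro prod_nonneg) simp

lemma gw_measurable[measurable]: "gw \<in> borel_measurable borel"
  unfolding gw_def by measurable

lemma std_gauss_gw: "std_gauss = density lborel (\<lambda>z. ennreal (gw z))"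
  unfolding std_gauss_def gw_def ..

lemma sets_std_gauss[simp, measurable_cong]: "sets std_gauss = sets borel"
  unfolding std_gauss_def by simp

lemma space_std_gauss[simp]: "space std_gauss = UNIV"
  unfolding std_gauss_def by simp

lemma gw_orth: "orthogonal_transformation (Q :: real^'n::finite \<Rightarrow> real^'n) \<Longrightarrow> gw (Q z) = gw z"
  by (simp add: gw_norm orthogonal_transformation_norm)

lemma std_gauss_orth:
  fixes Q :: "real^'n::finite \<Rightarrow> real^'n"
  assumes Q: "orthogonal_transformation Q"
  shows "distr std_gauss borel Q = std_gauss"
proof -
  have [measurable]: "Q \<in> borel_measurable borel" using Q by (rule orth_measurable)
  have "density (distr lborel borel Q) (\<lambda>z. ennreal (gw z)) =
        distr (density lborel (\<lambda>x. ennreal (gw (Q x)))) borel Q"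
    by (rule density_distr) auto
  then show ?thesis
    unfolding std_gauss_gw orth_lborel[OF Q] gw_orth[OF Q] by simp
qed

lemma js_orth:
  fixes Q :: "real^'n::finite \<Rightarrow> real^'n"
  assumes Q: "orthogonal_transformation Q"
  shows "js (Q y) = Q (js y)"
  unfolding js_def orthogonal_transformation_norm[OF Q]
  by (simp add: orthogonal_transformation_scaleR[OF Q])

lemma js_measurable[measurable]: "js \<in> borel_measurable borel"
  unfolding js_def by measurable

lemma js_risk_orth:
  fixes Q :: "real^'n::finite \<Rightarrow> real^'n"
  assumes Q: "orthogonal_transformation Q"
  shows "js_risk (Q \<mu>) = js_risk \<mu>"
proof -
  have [measurable]: "Q \<in> borel_measurable borel" using Q by (rule orth_measurable)
  have lin: "linear Q" using Q by (rule orthogonal_transformation_linear)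
  have "js_risk (Q \<mu>) = (\<integral>z. (norm (js (Q \<mu> + z) - Q \<mu>))\<^sup>2 \<partial>distr std_gauss borel Q)"
    unfolding js_risk_def std_gauss_orth[OF Q] ..
  also have "\<dots> = (\<integral>z. (norm (js (Q \<mu> + Q z) - Q \<mu>))\<^sup>2 \<partial>std_gauss)"
    by (rule integral_distr) auto
  also have "\<dots> = (\<integral>z. (norm (js (\<mu> + z) - \<mu>))\<^sup>2 \<partial>std_gauss)"
  proof (rule Bochner_Integration.integral_cong[OF refl])
    fix z
    have "js (Q \<mu> + Q z) - Q \<mu> = Q (js (\<mu> + z) - \<mu>)"
      by (simp add: linear_add[OF lin, symmetric] js_orth[OF Q] linear_diff[OF lin])
    then show "(norm (js (Q \<mu> + Q z) - Q \<mu>))\<^sup>2 = (norm (js (\<mu> + z) - \<mu>))\<^sup>2"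
      by (simp add: orthogonal_transformation_norm[OF Q])
  qed
  finally show ?thesis unfolding js_risk_def .
qed

lemma js_risk_radial:
  fixes \<mu> :: "real^'n::finite" and k :: 'n
  shows "js_risk \<mu> = js_risk (norm \<mu> *\<^sub>R axis k (1::real))"
proof (cases "\<mu> = 0")
  case True then show ?thesis by (simp only: norm_zero scale_zero_left)
next
  case False
  have n1: "norm (axis k (1::real)) = 1" by (rule norm_axis_1)
  have n2: "norm (\<mu> /\<^sub>R norm \<mu>) = 1" using False by simp
  obtain Q where Q: "orthogonal_transformation Q" "Q (axis k (1::real)) = \<mu> /\<^sub>R norm \<mu>"
    using orthogonal_transformation_exists_1[OF n1 n2] by blast
  have "Q (norm \<mu> *\<^sub>R axis k 1) = norm \<mu> *\<^sub>R Q (axis k 1)"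
    by (rule orthogonal_transformation_scaleR[OF Q(1)])
  also have "\<dots> = \<mu>" unfolding Q(2) using False by simp
  finally have eq: "Q (norm \<mu> *\<^sub>R axis k 1) = \<mu>" .
  show ?thesis using js_risk_orth[OF Q(1), of "norm \<mu> *\<^sub>R axis k 1"] unfolding eq by simp
qed


definition vupd :: "real^'n::finite \<Rightarrow> 'n \<Rightarrow> real \<Rightarrow> real^'n" where
  "vupd z i t = (\<chi> j. if j = i then t else z$j)"

definition Phi :: "'n::finite \<Rightarrow> (real^'n) \<times> real \<Rightarrow> (real^'n) \<times> real" where
  "Phi i p = (vupd (fst p) i (snd p), fst p $ i)"

lemma vupd_nth[simp]: "vupd z i t $ j = (if j = i then t else z$j)"
  unfolding vupd_def by simp

lemma Phi_Phi[simp]: "Phi i (Phi i p) = p"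
  by (cases p) (simp add: Phi_def vec_eq_iff)

lemma sum_remove_UNIV: "(\<Sum>j\<in>UNIV. f j) = f i + (\<Sum>j\<in>UNIV - {i}. f (j::'n::finite))"
  by (rule sum.remove) auto

lemma Phi_inner: "Phi i x \<bullet> y = x \<bullet> Phi i y"
proof -
  obtain z t where x: "x = (z, t)" by (cases x)
  obtain z' t' where y: "y = (z', t')" by (cases y)
  have A: "(\<Sum>j\<in>UNIV. vupd z i t $ j * z' $ j) = t * z'$i + (\<Sum>j\<in>UNIV - {i}. z $ j * z' $ j)"
    by (subst sum_remove_UNIV[of _ i]) (auto intro!: sum.cong)
  have B: "(\<Sum>j\<in>UNIV. z $ j * vupd z' i t' $ j) = z$i * t' + (\<Sum>j\<in>UNIV - {i}. z $ j * z' $ j)"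
    by (subst sum_remove_UNIV[of _ i]) (auto intro!: sum.cong)
  have L: "Phi i x \<bullet> y = (\<Sum>j\<in>UNIV. vupd z i t $ j * z' $ j) + z$i * t'"
    unfolding x y Phi_def by (simp add: inner_vec_def del: vupd_nth)
  have R: "x \<bullet> Phi i y = (\<Sum>j\<in>UNIV. z $ j * vupd z' i t' $ j) + t * z'$i"
    unfolding x y Phi_def by (simp add: inner_vec_def del: vupd_nth)
  show ?thesis
    unfolding L R A B by (simp add: algebra_simps)
qed

lemma axis_Basis_vec: "(axis j (1::real)) \<in> (Basis :: (real^'n::finite) set)"
  by (auto simp: Basis_vec_def)

lemma Basis_vec_cases:
  assumes "b \<in> (Basis :: (real^'n::finite) set)" obtains j where "b = axis j 1"
  using assms by (auto simp: Basis_vec_def)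

lemma Phi_Basis:
  assumes b: "b \<in> (Basis :: ((real^'n::finite) \<times> real) set)"
  shows "Phi i b \<in> Basis"
proof -
  from b consider (v) u where "u \<in> (Basis :: (real^'n) set)" "b = (u, 0)" | (r) "b = (0, 1)"
    unfolding Basis_prod_def by auto
  then show ?thesis
  proof cases
    case v
    then obtain j where j: "b = (axis j 1, 0)" by (auto elim: Basis_vec_cases)
    show ?thesis
    proof (cases "j = i")
      case True
      have "Phi i b = (0, 1)" unfolding j True Phi_def by (simp add: vec_eq_iff axis_def)
      then show ?thesis by (simp add: Basis_prod_def)
    next
      case False
      have "Phi i b = (axis j 1, 0)" unfolding j Phi_def using False by (simp add: vec_eq_iff axis_def)
      then show ?thesis by (simp add: Basis_prod_def axis_Basis_vec)
    qed
  next
    case r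
    have "Phi i b = (axis i 1, 0)" unfolding r Phi_def by (simp add: vec_eq_iff axis_def)
    then show ?thesis by (simp add: Basis_prod_def axis_Basis_vec)
  qed
qed

lemma Phi_bij_Basis: "bij_betw (Phi i) (Basis :: ((real^'n::finite) \<times> real) set) Basis"
  by (rule bij_betw_byWitness[where f'="Phi i"]) (auto intro: Phi_Basis simp: image_subset_iff)

lemma Phi_image_Basis: "Phi i ` (Basis :: ((real^'n::finite) \<times> real) set) = Basis"
  using Phi_bij_Basis bij_betw_imp_surj_on by blast

lemma ball_Basis_Phi: "(\<forall>b\<in>(Basis :: ((real^'n::finite) \<times> real) set). P (Phi i b)) \<longleftrightarrow> (\<forall>b\<in>Basis. P b)"
proof -
  have "(\<forall>b\<in>Basis. P (Phi i b)) \<longleftrightarrow> (\<forall>b\<in>Phi i ` (Basis :: ((real^'n::finite) \<times> real) set). P b)"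
    by auto
  then show ?thesis unfolding Phi_image_Basis .
qed

lemma Phi_box: "Phi i -` box l u = box (Phi i l) (Phi i u)"
proof -
  have "x \<in> box (Phi i l) (Phi i u) \<longleftrightarrow> Phi i x \<in> box l u" for x
  proof -
    have "x \<in> box (Phi i l) (Phi i u) \<longleftrightarrow>
      (\<forall>b\<in>Basis. l \<bullet> Phi i b < Phi i x \<bullet> Phi i b \<and> Phi i x \<bullet> Phi i b < u \<bullet> Phi i b)"
      unfolding mem_box Phi_inner Phi_Phi ..
    also have "\<dots> \<longleftrightarrow> Phi i x \<in> box l u"
      unfolding ball_Basis_Phi[where P="\<lambda>b. l \<bullet> b < Phi i x \<bullet> b \<and> Phi i x \<bullet> b < u \<bullet> b"] mem_box ..
    finally show ?thesis .
  qed
  then show ?thesis by auto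
qed

lemma Phi_continuous: "continuous_on UNIV (Phi (i::'n::finite))"
proof -
  have c: "continuous_on UNIV (\<lambda>p::(real^'n) \<times> real. if j = i then snd p else fst p $ j)" for j :: "'n"
    by (cases "j = i") (auto intro!: continuous_intros)
  show ?thesis
    unfolding Phi_def[abs_def] vupd_def
    by (intro continuous_intros c)
qed

lemma Phi_measurable[measurable]: "Phi i \<in> borel_measurable borel"
  by (rule borel_measurable_continuous_onI[OF Phi_continuous])

lemma Phi_lborel: "distr lborel borel (Phi i) = (lborel :: ((real^'n::finite) \<times> real) measure)"
proof (rule lborel_eqI[symmetric])
  fix l u :: "(real^'n) \<times> real"
  assume le: "\<And>b. b \<in> Basis \<Longrightarrow> l \<bullet> b \<le> u \<bullet> b"
  have le': "\<forall>b\<in>Basis. Phi i l \<bullet> b \<le> Phi i u \<bullet> b"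
  proof
    fix b :: "(real^'n) \<times> real" assume "b \<in> Basis"
    then have "Phi i b \<in> Basis" by (rule Phi_Basis)
    then have "l \<bullet> Phi i b \<le> u \<bullet> Phi i b" by (rule le)
    then show "Phi i l \<bullet> b \<le> Phi i u \<bullet> b" by (simp only: Phi_inner)
  qed
  have "emeasure (distr lborel borel (Phi i)) (box l u) = emeasure lborel (Phi i -` box l u)"
    by (simp add: emeasure_distr)
  also have "\<dots> = (\<Prod>b\<in>Basis. (Phi i u - Phi i l) \<bullet> b)"
    unfolding Phi_box using le' by (simp add: emeasure_lborel_box_eq)
  also have "(\<Prod>b\<in>Basis. (Phi i u - Phi i l) \<bullet> b) = (\<Prod>b\<in>Basis. (u - l) \<bullet> Phi i b)"
    by (simp add: inner_diff_left Phi_inner)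
  also have "\<dots> = (\<Prod>b\<in>Basis. (u - l) \<bullet> b)"
    using prod.reindex_bij_betw[OF Phi_bij_Basis[of i], of "\<lambda>b. (u - l) \<bullet> b"] by simp
  finally show "emeasure (distr lborel borel (Phi i)) (box l u) = (\<Prod>b\<in>Basis. (u - l) \<bullet> b)" .
qed simp


definition stdN :: "real measure" where
  "stdN = density lborel (\<lambda>x. ennreal (std_normal_density x))"

lemma sets_stdN[simp, measurable_cong]: "sets stdN = sets borel"
  unfolding stdN_def by simp

lemma space_stdN[simp]: "space stdN = UNIV"
  unfolding stdN_def by simp

lemma prob_stdN: "prob_space stdN"
  unfolding stdN_def by (rule prob_space_normal_density) simp

lemma nn_std_normal: "(\<integral>\<^sup>+ x. ennreal (std_normal_density x) \<partial>lborel) = 1"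
proof -
  have "emeasure stdN (space stdN) = 1" by (rule prob_space.emeasure_space_1[OF prob_stdN])
  then show ?thesis unfolding stdN_def by (simp add: emeasure_density)
qed

lemma Basis_vec_range: "(Basis :: (real^'n::finite) set) = range (\<lambda>j. axis j 1)"
  by (auto simp: Basis_vec_def)

lemma gw_Basis: "gw (z::real^'n::finite) = (\<Prod>b\<in>Basis. std_normal_density (z \<bullet> b))"
proof -
  have inj: "inj (\<lambda>j::'n. axis j (1::real))"
    by (auto simp: inj_on_def axis_eq_axis)
  show ?thesis
    unfolding Basis_vec_range gw_def prod.reindex[OF inj] by (simp add: inner_axis)
qed

lemma prob_G: "prob_space (std_gauss :: (real^'n::finite) measure)"
proof
  have "emeasure (std_gauss :: (real^'n) measure) (space std_gauss)
      = (\<integral>\<^sup>+ z. ennreal (gw (z::real^'n)) \<partial>lborel)"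
    unfolding std_gauss_gw by (simp add: emeasure_density)
  also have "\<dots> = (\<integral>\<^sup>+ z. ennreal (\<Prod>b\<in>Basis. std_normal_density ((z::real^'n) \<bullet> b)) \<partial>lborel)"
    unfolding gw_Basis ..
  also have "\<dots> = (\<Prod>b\<in>(Basis :: (real^'n) set). (\<integral>\<^sup>+x. std_normal_density x \<partial>lborel))"
    apply (subst prod_ennreal[symmetric])
     apply simp
    apply (rule nn_integral_lborel_prod)
     apply auto
    done
  also have "\<dots> = 1" by (simp add: nn_std_normal)
  finally show "emeasure (std_gauss :: (real^'n) measure) (space std_gauss) = 1" .
qed

definition Wd :: "(real^'n::finite) \<times> real \<Rightarrow> ennreal" where
  "Wd p = ennreal (gw (fst p) * std_normal_density (snd p))"

lemma Wd_measurable[measurable]: "Wd \<in> borel_measurable borel"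
  unfolding Wd_def borel_prod[symmetric] by measurable

lemma GN: "std_gauss \<Otimes>\<^sub>M stdN = density lborel (Wd :: (real^'n::finite) \<times> real \<Rightarrow> ennreal)"
proof -
  have sf1: "sigma_finite_measure (lborel :: real measure)"
    by (rule lborel.sigma_finite_measure_axioms)
  have sf2: "sigma_finite_measure (density lborel (\<lambda>x. ennreal (std_normal_density x)))"
    using prob_stdN unfolding stdN_def prob_space_def finite_measure_def by simp
  have "std_gauss \<Otimes>\<^sub>M stdN = density (lborel \<Otimes>\<^sub>M lborel)
          (\<lambda>(x,y). ennreal (gw (x::real^'n)) * ennreal (std_normal_density y))"
    unfolding std_gauss_gw stdN_def
    by (rule pair_measure_density) (auto simp: sf1 sf2)
  also have "\<dots> = density lborel Wd"
  proof -
    have "(\<lambda>(x,y). ennreal (gw (x::real^'n)) * ennreal (std_normal_density y)) = Wd"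
      by (auto simp: fun_eq_iff Wd_def ennreal_mult'[symmetric] gw_nonneg)
    then show ?thesis unfolding lborel_prod by simp
  qed
  finally show ?thesis .
qed

lemma gw_vupd: "gw (vupd z i t) = std_normal_density t * (\<Prod>j\<in>UNIV - {i}. std_normal_density (z $ j))"
  unfolding gw_def by (subst prod.remove[of UNIV i]) (auto intro!: prod.cong)

lemma gw_remove: "gw z = std_normal_density (z$i) * (\<Prod>j\<in>UNIV - {i}. std_normal_density (z $ j))"
  unfolding gw_def by (subst prod.remove[of UNIV i]) auto

lemma Wd_Phi: "Wd (Phi i p) = Wd p"
  by (cases p) (simp add: Wd_def Phi_def gw_vupd gw_remove[of _ i] mult_ac)

lemma GN_Phi: "distr (std_gauss \<Otimes>\<^sub>M stdN) borel (Phi i) = (std_gauss \<Otimes>\<^sub>M stdN :: ((real^'n::finite) \<times> real) measure)"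
proof -
  have "density (distr lborel borel (Phi i)) Wd = distr (density lborel (\<lambda>x. Wd (Phi i x))) borel (Phi i)"
    by (rule density_distr) (simp_all add: measurable_lborel1)
  then show ?thesis unfolding GN Phi_lborel Wd_Phi by (rule sym)
qed

lemma sets_GN: "sets (std_gauss \<Otimes>\<^sub>M stdN) = sets (borel :: ((real^'n::finite) \<times> real) measure)"
  unfolding GN by simp

lemma meas_GN: "h \<in> borel_measurable borel \<Longrightarrow> h \<in> borel_measurable (std_gauss \<Otimes>\<^sub>M stdN)"
  unfolding measurable_cong_sets[OF sets_GN refl] .

lemma meas_fst:
  assumes "h \<in> borel_measurable borel"
  shows "(\<lambda>p::(real^'n::finite)\<times>real. h (fst p)) \<in> borel_measurable borel"
  unfolding borel_prod[symmetric] by (rule measurable_compose[OF measurable_fst assms])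

lemma meas_fst_Phi:
  assumes "h \<in> borel_measurable borel"
  shows "(\<lambda>p::(real^'n::finite)\<times>real. h (fst (Phi i p))) \<in> borel_measurable borel"
  by (rule measurable_compose[OF Phi_measurable meas_fst[OF assms]])

lemma emeasure_stdN_UNIV[simp]: "emeasure stdN UNIV = 1"
  using prob_space.emeasure_space_1[OF prob_stdN] by simp

lemma measure_stdN_UNIV[simp]: "measure stdN UNIV = 1"
  using prob_space.prob_space[OF prob_stdN] by simp

lemma nn_resample:
  fixes f :: "real^'n::finite \<Rightarrow> ennreal"
  assumes [measurable]: "f \<in> borel_measurable borel"
  shows "(\<integral>\<^sup>+ z. f z \<partial>std_gauss) = (\<integral>\<^sup>+ z. (\<integral>\<^sup>+ t. f (vupd z i t) \<partial>stdN) \<partial>std_gauss)"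
proof -
  interpret N: prob_space stdN by (rule prob_stdN)
  have "(\<integral>\<^sup>+ z. (\<integral>\<^sup>+ t. f (vupd z i t) \<partial>stdN) \<partial>std_gauss)
      = (\<integral>\<^sup>+ p. f (fst (Phi i p)) \<partial>(std_gauss \<Otimes>\<^sub>M stdN))"
    using N.nn_integral_fst[of "\<lambda>p. f (fst (Phi i p))" std_gauss, OF meas_GN[OF meas_fst_Phi]] by (simp add: Phi_def)
  also have "\<dots> = (\<integral>\<^sup>+ p. f (fst p) \<partial>distr (std_gauss \<Otimes>\<^sub>M stdN) borel (Phi i))"
    by (rule nn_integral_distr[symmetric]) (auto intro: meas_GN Phi_measurable meas_fst)
  also have "\<dots> = (\<integral>\<^sup>+ p. f (fst p) \<partial>(std_gauss \<Otimes>\<^sub>M stdN))"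
    unfolding GN_Phi ..
  also have "\<dots> = (\<integral>\<^sup>+ z. (\<integral>\<^sup>+ t. f z \<partial>stdN) \<partial>std_gauss)"
    using N.nn_integral_fst[of "\<lambda>p. f (fst p)" std_gauss, OF meas_GN[OF meas_fst]] by simp
  also have "\<dots> = (\<integral>\<^sup>+ z. f z \<partial>std_gauss)"
    by (simp add: N.emeasure_space_1)
  finally show ?thesis ..
qed

lemma integrable_fst_GN:
  fixes f :: "real^'n::finite \<Rightarrow> real"
  assumes f: "integrable std_gauss f"
  shows "integrable (std_gauss \<Otimes>\<^sub>M stdN) (\<lambda>p. f (fst p))"
proof -
  interpret N: prob_space stdN by (rule prob_stdN)
  have [measurable]: "f \<in> borel_measurable borel"
    using borel_measurable_integrable[OF f] unfolding measurable_cong_sets[OF sets_std_gauss refl] .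
  have "(\<integral>\<^sup>+ p. ennreal (norm (f (fst p))) \<partial>(std_gauss \<Otimes>\<^sub>M stdN))
     = (\<integral>\<^sup>+ z. (\<integral>\<^sup>+ t. ennreal (norm (f z)) \<partial>stdN) \<partial>std_gauss)"
    using N.nn_integral_fst[of "\<lambda>p. ennreal (norm (f (fst p)))" std_gauss, OF meas_GN[OF meas_fst]] by simp
  also have "\<dots> = (\<integral>\<^sup>+ z. ennreal (norm (f z)) \<partial>std_gauss)"
    by (simp add: N.emeasure_space_1)
  also have "\<dots> < \<infinity>" using f by (simp add: integrable_iff_bounded)
  finally show ?thesis by (simp add: integrable_iff_bounded)
qed

lemma resample:
  fixes f :: "real^'n::finite \<Rightarrow> real"
  assumes f: "integrable std_gauss f"
  shows "(\<integral> z. f z \<partial>std_gauss) = (\<integral> z. (\<integral> t. f (vupd z i t) \<partial>stdN) \<partial>std_gauss)"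
proof -
  interpret N: prob_space stdN by (rule prob_stdN)
  interpret G: prob_space "std_gauss :: (real^'n) measure" by (rule prob_G)
  interpret GN: pair_sigma_finite "std_gauss :: (real^'n) measure" stdN
    by unfold_locales
  have [measurable]: "f \<in> borel_measurable borel"
    using borel_measurable_integrable[OF f] unfolding measurable_cong_sets[OF sets_std_gauss refl] .
  have i1: "integrable (std_gauss \<Otimes>\<^sub>M stdN) (\<lambda>p. f (fst p))"
    by (rule integrable_fst_GN[OF f])
  have i2: "integrable (std_gauss \<Otimes>\<^sub>M stdN) (\<lambda>p. f (fst (Phi i p)))"
  proof -
    have "integrable (distr (std_gauss \<Otimes>\<^sub>M stdN) borel (Phi i)) (\<lambda>p. f (fst p))"
      using i1 by (simp only: GN_Phi)
    then show ?thesis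
      by (subst (asm) integrable_distr_eq) (auto intro: meas_GN meas_fst)
  qed
  have "(\<integral> z. (\<integral> t. f (vupd z i t) \<partial>stdN) \<partial>std_gauss)
      = (\<integral> p. f (fst (Phi i p)) \<partial>(std_gauss \<Otimes>\<^sub>M stdN))"
    using GN.integral_fst'[OF i2] by (simp add: Phi_def)
  also have "\<dots> = (\<integral> p. f (fst p) \<partial>distr (std_gauss \<Otimes>\<^sub>M stdN) borel (Phi i))"
    by (rule integral_distr[symmetric]) (auto intro: meas_GN Phi_measurable meas_fst)
  also have "\<dots> = (\<integral> p. f (fst p) \<partial>(std_gauss \<Otimes>\<^sub>M stdN))"
    unfolding GN_Phi ..
  also have "\<dots> = (\<integral> z. (\<integral> t. f z \<partial>stdN) \<partial>std_gauss)"
    using GN.integral_fst'[OF i1] by simp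
  also have "\<dots> = (\<integral> z. f z \<partial>std_gauss)"
    by (simp add: N.prob_space)
  finally show ?thesis ..
qed


lemma integral_deriv_zero:
  fixes F F' :: "real \<Rightarrow> real"
  assumes fin: "finite S" and cont: "continuous_on UNIV F"
    and der: "\<And>x. x \<notin> S \<Longrightarrow> (F has_real_derivative F' x) (at x)"
    and int: "integrable lborel F'"
    and lim1: "(F \<longlongrightarrow> 0) at_top" and lim2: "(F \<longlongrightarrow> 0) at_bot"
  shows "integral\<^sup>L lborel F' = 0"
proof -
  define s where "s n x = indicator {- real n .. real n} x * F' x" for n :: nat and x
  have Fm[measurable]: "F' \<in> borel_measurable borel"
    using borel_measurable_integrable[OF int] by simp
  have conv: "(\<lambda>n. integral\<^sup>L lborel (s n)) \<longlonglongrightarrow> integral\<^sup>L lborel F'"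
  proof (rule integral_dominated_convergence[where w="\<lambda>x. norm (F' x)"])
    show "F' \<in> borel_measurable lborel" by simp
    show "s n \<in> borel_measurable lborel" for n unfolding s_def by measurable
    show "integrable lborel (\<lambda>x. norm (F' x))" using int by simp
    show "AE x in lborel. (\<lambda>n. s n x) \<longlonglongrightarrow> F' x"
    proof (rule AE_I2)
      fix x :: real
      obtain N :: nat where "\<bar>x\<bar> \<le> real N" using real_arch_simple by blast
      then have "eventually (\<lambda>n. s n x = F' x) sequentially"
        unfolding eventually_sequentially s_def
        by (intro exI[of _ N]) (auto simp: indicator_def)
      then show "(\<lambda>n. s n x) \<longlonglongrightarrow> F' x" by (rule tendsto_eventually)
    qed
    show "AE x in lborel. norm (s n x) \<le> norm (F' x)" for n
      unfolding s_def by (auto simp: indicator_def)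
  qed
  have eq: "integral\<^sup>L lborel (s n) = F (real n) - F (- real n)" for n
  proof -
    have si: "set_integrable lborel {- real n .. real n} F'"
      unfolding set_integrable_def by (rule integrable_mult_indicator) (auto simp: int)
    have "integral\<^sup>L lborel (s n) = (LINT x:{- real n .. real n}|lborel. F' x)"
      unfolding s_def set_lebesgue_integral_def by simp
    also have "\<dots> = integral {- real n .. real n} F'"
      by (rule set_borel_integral_eq_integral(2)[OF si])
    also have "\<dots> = F (real n) - F (- real n)"
    proof (rule integral_unique, rule fundamental_theorem_of_calculus_interior_strong[OF fin])
      show "- real n \<le> real n" by simp
      show "(F has_vector_derivative F' x) (at x)" if "x \<in> {- real n<..<real n} - S" for x
        using der[of x] that by (simp add: has_real_derivative_iff_has_vector_derivative)
      show "continuous_on {- real n..real n} F"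
        using cont by (rule continuous_on_subset) simp
    qed
    finally show ?thesis .
  qed
  have l1: "(\<lambda>n. F (real n)) \<longlonglongrightarrow> 0"
    by (rule filterlim_compose[OF lim1 filterlim_real_sequentially])
  have l2: "(\<lambda>n. F (- real n)) \<longlonglongrightarrow> 0"
    by (rule filterlim_compose[OF lim2 filterlim_compose[OF filterlim_uminus_at_bot_at_top filterlim_real_sequentially]])
  have "(\<lambda>n. integral\<^sup>L lborel (s n)) \<longlonglongrightarrow> 0 - 0"
    unfolding eq by (intro tendsto_diff l1 l2)
  then show ?thesis using conv LIMSEQ_unique by fastforce
qed

lemma phi_deriv: "(std_normal_density has_real_derivative (- x * std_normal_density x)) (at x)"
proof -
  define c where "c = 1 / sqrt (2 * pi)"
  have e: "std_normal_density = (\<lambda>x. c * exp (- x\<^sup>2 / 2))"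
    by (rule ext) (simp add: std_normal_density_def c_def)
  have "((\<lambda>x. c * exp (- x\<^sup>2 / 2)) has_real_derivative
         c * (exp (- x\<^sup>2 / 2) * (- (2 * x) / 2))) (at x)"
    by (auto intro!: derivative_eq_intros)
  then show ?thesis unfolding e by (simp add: algebra_simps)
qed

lemma phi_limit_top: "((\<lambda>x. (A + B * x) * std_normal_density x) \<longlongrightarrow> 0) at_top"
  unfolding std_normal_density_def by real_asymp

lemma phi_limit_bot: "((\<lambda>x. (A - B * x) * std_normal_density x) \<longlongrightarrow> 0) at_bot"
  unfolding std_normal_density_def by real_asymp

lemma phi_pos: "0 \<le> std_normal_density x" by simp

lemma stein1:
  fixes H D :: "real \<Rightarrow> real"
  assumes fin: "finite S" and cont: "continuous_on UNIV H"
    and der: "\<And>x. x \<notin> S \<Longrightarrow> (H has_real_derivative D x) (at x)"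
    and Dm[measurable]: "D \<in> borel_measurable borel"
    and Db: "\<And>x. \<bar>D x\<bar> \<le> C"
    and Hb0: "\<And>x. \<bar>H x\<bar> \<le> A0 + B0 * \<bar>x\<bar>"
  shows "integrable stdN (\<lambda>x. x * H x)" "integrable stdN D"
    "(\<integral>x. x * H x \<partial>stdN) = (\<integral>x. D x \<partial>stdN)"
proof -
  define A where "A = \<bar>A0\<bar>"
  define B where "B = \<bar>B0\<bar>"
  have B: "0 \<le> B" unfolding B_def by simp
  have Hb: "\<bar>H x\<bar> \<le> A + B * \<bar>x\<bar>" for x
  proof -
    have "B0 * \<bar>x\<bar> \<le> B * \<bar>x\<bar>" unfolding B_def by (rule mult_right_mono) auto
    then show ?thesis using Hb0[of x] unfolding A_def by linarith
  qed
  have Hm[measurable]: "H \<in> borel_measurable borel"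
    by (rule borel_measurable_continuous_onI[OF cont])
  define F where "F x = H x * std_normal_density x" for x
  define F' where "F' x = D x * std_normal_density x - x * H x * std_normal_density x" for x
  have iD: "integrable lborel (\<lambda>x. std_normal_density x * D x)"
  proof (rule Bochner_Integration.integrable_bound[where f="\<lambda>x. C * std_normal_density x"])
    show "integrable lborel (\<lambda>x. C * std_normal_density x)" by simp
    show "(\<lambda>x. std_normal_density x * D x) \<in> borel_measurable lborel" by simp
    show "AE x in lborel. norm (std_normal_density x * D x) \<le> norm (C * std_normal_density x)"
    proof (rule AE_I2)
      fix x
      have "\<bar>D x\<bar> \<le> \<bar>C\<bar>" using Db[of x] by linarith
      then have "std_normal_density x * \<bar>D x\<bar> \<le> std_normal_density x * \<bar>C\<bar>"
        by (rule mult_left_mono) simp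
      then show "norm (std_normal_density x * D x) \<le> norm (C * std_normal_density x)"
        by (simp add: abs_mult mult_ac)
    qed
  qed
  have iH: "integrable lborel (\<lambda>x. std_normal_density x * (x * H x))"
  proof (rule Bochner_Integration.integrable_bound[where
        f="\<lambda>x. \<bar>A\<bar> * (std_normal_density x * \<bar>x\<bar> ^ 1) + B * (std_normal_density x * x ^ 2)"])
    show "integrable lborel (\<lambda>x. \<bar>A\<bar> * (std_normal_density x * \<bar>x\<bar> ^ 1) + B * (std_normal_density x * x ^ 2))"
      by (intro Bochner_Integration.integrable_add integrable_mult_right
          integrable_std_normal_moment_abs integrable_std_normal_moment)
    show "(\<lambda>x. std_normal_density x * (x * H x)) \<in> borel_measurable lborel" by simp
    show "AE x in lborel. norm (std_normal_density x * (x * H x)) \<le>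
        norm (\<bar>A\<bar> * (std_normal_density x * \<bar>x\<bar> ^ 1) + B * (std_normal_density x * x ^ 2))"
    proof (rule AE_I2)
      fix x :: real
      have "\<bar>x * H x\<bar> \<le> \<bar>x\<bar> * (A + B * \<bar>x\<bar>)"
        unfolding abs_mult by (rule mult_left_mono[OF Hb]) simp
      also have "\<dots> \<le> \<bar>A\<bar> * \<bar>x\<bar> + B * x^2"
        using B by (auto simp: algebra_simps power2_eq_square abs_mult_self_eq intro: mult_right_mono)
      finally have *: "\<bar>x * H x\<bar> \<le> \<bar>A\<bar> * \<bar>x\<bar> + B * x^2" .
      have "std_normal_density x * \<bar>x * H x\<bar> \<le> std_normal_density x * (\<bar>A\<bar> * \<bar>x\<bar> + B * x^2)"
        by (rule mult_left_mono[OF *]) simp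
      then show "norm (std_normal_density x * (x * H x)) \<le>
        norm (\<bar>A\<bar> * (std_normal_density x * \<bar>x\<bar> ^ 1) + B * (std_normal_density x * x ^ 2))"
        using B by (simp add: abs_mult algebra_simps)
    qed
  qed
  have iF': "integrable lborel F'"
    unfolding F'_def using Bochner_Integration.integrable_diff[OF iD iH] by (simp add: mult_ac)
  have dF: "(F has_real_derivative F' x) (at x)" if "x \<notin> S" for x
    unfolding F_def F'_def
    using DERIV_mult[OF der[OF that] phi_deriv[of x]] by (simp add: algebra_simps)
  have cF: "continuous_on UNIV F"
    unfolding F_def std_normal_density_def by (intro continuous_intros cont) auto
  have bF: "\<bar>F x\<bar> \<le> (A + B * \<bar>x\<bar>) * std_normal_density x" for x
  proof -
    have "\<bar>H x\<bar> * std_normal_density x \<le> (A + B * \<bar>x\<bar>) * std_normal_density x"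
      by (rule mult_right_mono[OF Hb]) simp
    then show ?thesis unfolding F_def abs_mult by simp
  qed
  have lim1: "(F \<longlongrightarrow> 0) at_top"
  proof (rule Lim_null_comparison[OF _ phi_limit_top[of A B]])
    show "\<forall>\<^sub>F x in at_top. norm (F x) \<le> (A + B * x) * std_normal_density x"
      using eventually_ge_at_top[of 0]
    proof eventually_elim
      case (elim x) then show ?case using bF[of x] abs_of_nonneg[of x] by simp
    qed
  qed
  have lim2: "(F \<longlongrightarrow> 0) at_bot"
  proof (rule Lim_null_comparison[OF _ phi_limit_bot[of A B]])
    show "\<forall>\<^sub>F x in at_bot. norm (F x) \<le> (A - B * x) * std_normal_density x"
      using eventually_le_at_bot[of 0]
    proof eventually_elim
      case (elim x) then show ?case using bF[of x] abs_of_nonpos[of x] by simp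
    qed
  qed
  have z: "integral\<^sup>L lborel F' = 0"
    by (rule integral_deriv_zero[OF fin cF dF iF' lim1 lim2])
  have "integral\<^sup>L lborel F' = (\<integral>x. std_normal_density x * D x \<partial>lborel) - (\<integral>x. std_normal_density x * (x * H x) \<partial>lborel)"
    unfolding F'_def using Bochner_Integration.integral_diff[OF iD iH] by (simp add: mult_ac)
  then have e: "(\<integral>x. std_normal_density x * (x * H x) \<partial>lborel) = (\<integral>x. std_normal_density x * D x \<partial>lborel)"
    using z by simp
  show "integrable stdN (\<lambda>x. x * H x)" unfolding stdN_def
    by (subst integrable_density) (use iH in auto)
  show "integrable stdN D" unfolding stdN_def
    by (subst integrable_density) (use iD in auto)
  show "(\<integral>x. x * H x \<partial>stdN) = (\<integral>x. D x \<partial>stdN)" unfolding stdN_def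
    by (subst (1 2) integral_density) (use e in auto)
qed


definition mm :: "real \<Rightarrow> real \<Rightarrow> real" where
  "mm c t = c / max t c"

definition mm' :: "real \<Rightarrow> real \<Rightarrow> real" where
  "mm' c t = (if t \<le> c then 0 else - c / t\<^sup>2)"

definition Hf :: "real \<Rightarrow> real \<Rightarrow> real \<Rightarrow> real" where
  "Hf c a u = - mm c (a + u\<^sup>2) * u"

definition Df :: "real \<Rightarrow> real \<Rightarrow> real \<Rightarrow> real" where
  "Df c a u = - mm c (a + u\<^sup>2) - 2 * mm' c (a + u\<^sup>2) * u\<^sup>2"

lemma mm_measurable[measurable]: "mm c \<in> borel_measurable borel"
  unfolding mm_def by measurable

lemma mm'_measurable[measurable]: "mm' c \<in> borel_measurable borel"
  unfolding mm'_def by measurable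

lemma mm_bounds: "0 < c \<Longrightarrow> 0 \<le> mm c t \<and> mm c t \<le> 1"
  unfolding mm_def by (auto simp: divide_le_eq_1)

lemma mm_le: "0 < c \<Longrightarrow> t \<le> c \<Longrightarrow> mm c t = 1"
  unfolding mm_def by (simp add: max_def)

lemma mm_gt: "0 < c \<Longrightarrow> c < t \<Longrightarrow> mm c t = c / t"
  unfolding mm_def by (simp add: max_def)

lemma Hf_cont: "0 < c \<Longrightarrow> continuous_on UNIV (Hf c a)"
  unfolding Hf_def[abs_def] mm_def
  by (intro continuous_intros) (auto simp: max_def)

lemma Hf_bound: "0 < c \<Longrightarrow> \<bar>Hf c a u\<bar> \<le> \<bar>u\<bar>"
  using mm_bounds[of c "a + u\<^sup>2"] unfolding Hf_def abs_mult
  by (auto intro: mult_left_le_one_le)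

lemma Df_bound:
  assumes c: "0 < c" and a: "0 \<le> a"
  shows "\<bar>Df c a u\<bar> \<le> 3"
proof (cases "a + u\<^sup>2 \<le> c")
  case True then show ?thesis unfolding Df_def mm'_def using mm_le[OF c True] by simp
next
  case False
  let ?t = "a + u\<^sup>2"
  have t: "c < ?t" using False by simp
  have tp: "0 < ?t" using t c by linarith
  have "\<bar>2 * mm' c ?t * u\<^sup>2\<bar> = 2 * c * u\<^sup>2 / ?t\<^sup>2"
    unfolding mm'_def using False c by (simp add: abs_mult)
  also have "\<dots> \<le> 2 * c * ?t / ?t\<^sup>2"
    using a c tp by (intro divide_right_mono mult_left_mono) auto
  also have "\<dots> = 2 * (c / ?t)"
    using tp by (simp add: power2_eq_square)
  also have "\<dots> \<le> 2"
  proof -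
    have "c / ?t \<le> 1" using t c by simp
    then show ?thesis by linarith
  qed
  finally have "\<bar>2 * mm' c ?t * u\<^sup>2\<bar> \<le> 2" .
  moreover have "\<bar>mm c ?t\<bar> \<le> 1" using mm_bounds[OF c, of ?t] by simp
  ultimately show ?thesis unfolding Df_def by linarith
qed

lemma Hf_deriv:
  assumes c: "0 < c" and u: "a + u\<^sup>2 \<noteq> c"
  shows "(Hf c a has_real_derivative Df c a u) (at u)"
proof (cases "a + u\<^sup>2 < c")
  case True
  have op: "open {v. a + v\<^sup>2 < c}"
    by (intro open_Collect_less continuous_intros)
  have "((\<lambda>v. - v) has_real_derivative Df c a u) (at u)"
    unfolding Df_def mm'_def using mm_le[OF c, of "a + u\<^sup>2"] True
    by (auto intro!: derivative_eq_intros)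
  then show ?thesis
    by (rule has_field_derivative_transform_within_open[OF _ op])
       (use True c in \<open>auto simp: Hf_def mm_le\<close>)
next
  case False
  then have t: "c < a + u\<^sup>2" using u by simp
  have tp: "0 < a + u\<^sup>2" using t c by linarith
  have op: "open {v. c < a + v\<^sup>2}"
    by (intro open_Collect_less continuous_intros)
  have "((\<lambda>v. - (c / (a + v\<^sup>2)) * v) has_real_derivative Df c a u) (at u)"
  proof -
    have nle: "\<not> a + u\<^sup>2 \<le> c" using t by simp
    have tz: "a + u\<^sup>2 \<noteq> 0" using tp by simp
    have d1: "((\<lambda>v. a + v\<^sup>2) has_real_derivative 2 * u) (at u)"
      by (auto intro!: derivative_eq_intros)
    have d2: "((\<lambda>v. c / (a + v\<^sup>2)) has_real_derivative
        (0 * (a + u\<^sup>2) - c * (2 * u)) / ((a + u\<^sup>2) * (a + u\<^sup>2))) (at u)"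
      by (rule DERIV_divide[OF DERIV_const d1 tz])
    have d3: "((\<lambda>v. - (c / (a + v\<^sup>2)) * v) has_real_derivative
        (- ((0 * (a + u\<^sup>2) - c * (2 * u)) / ((a + u\<^sup>2) * (a + u\<^sup>2)))) * u + 1 * (- (c / (a + u\<^sup>2)))) (at u)"
      by (rule DERIV_mult[OF DERIV_minus[OF d2] DERIV_ident])
    have aux: "T \<noteq> 0 \<Longrightarrow> (- ((0 * T - c * (2 * u)) / (T * T))) * u + 1 * (- (c / T))
        = - (c / T) - 2 * (- c / T\<^sup>2) * u\<^sup>2" for T
      by (simp add: field_simps power2_eq_square)
    show ?thesis
      using d3 unfolding aux[OF tz] Df_def mm'_def mm_gt[OF c t] using nle by simp
  qed
  then show ?thesis
    by (rule has_field_derivative_transform_within_open[OF _ op])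
       (use t c in \<open>auto simp: Hf_def mm_gt\<close>)
qed

lemma kink_finite: "finite {u::real. a + u\<^sup>2 = c}"
proof (rule finite_subset)
  show "{u::real. a + u\<^sup>2 = c} \<subseteq> {sqrt (c - a), - sqrt (c - a)}"
  proof
    fix u assume "u \<in> {u::real. a + u\<^sup>2 = c}"
    then have "u\<^sup>2 = c - a" by simp
    then have "\<bar>u\<bar> = sqrt (c - a)" by (metis real_sqrt_abs)
    then show "u \<in> {sqrt (c - a), - sqrt (c - a)}" by (auto simp: abs_if split: if_splits)
  qed
qed simp

lemma Df_measurable[measurable]: "(\<lambda>u. Df c a (b + u)) \<in> borel_measurable borel"
  unfolding Df_def by measurable

lemma stein_shift:
  assumes c: "0 < c" and a: "0 \<le> a"
  shows "integrable stdN (\<lambda>t. t * Hf c a (b + t))" "integrable stdN (\<lambda>t. Df c a (b + t))"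
    "(\<integral>t. t * Hf c a (b + t) \<partial>stdN) = (\<integral>t. Df c a (b + t) \<partial>stdN)"
proof -
  let ?S = "(\<lambda>u. u - b) ` {u::real. a + u\<^sup>2 = c}"
  have fin: "finite ?S" using kink_finite by simp
  have cont: "continuous_on UNIV (\<lambda>t. Hf c a (b + t))"
  proof -
    have "continuous_on UNIV (Hf c a \<circ> (\<lambda>t. b + t))"
      by (rule continuous_on_compose[OF continuous_on_add[OF continuous_on_const continuous_on_id]])
         (rule continuous_on_subset[OF Hf_cont[OF c] subset_UNIV])
    then show ?thesis by (simp add: o_def)
  qed
  have der: "((\<lambda>t. Hf c a (b + t)) has_real_derivative Df c a (b + t)) (at t)" if "t \<notin> ?S" for t
  proof -
    have ne: "a + (b + t)\<^sup>2 \<noteq> c" using that by (auto simp: image_iff)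
    have d: "((\<lambda>t. b + t) has_real_derivative 1) (at t)"
      by (auto intro!: derivative_eq_intros)
    from DERIV_chain2[where f="Hf c a" and g="\<lambda>t. b + t" and x=t, OF Hf_deriv[OF c ne] d]
    show ?thesis by simp
  qed
  have Db: "\<bar>Df c a (b + t)\<bar> \<le> 3" for t by (rule Df_bound[OF c a])
  have Hb: "\<bar>Hf c a (b + t)\<bar> \<le> \<bar>b\<bar> + 1 * \<bar>t\<bar>" for t
    using Hf_bound[OF c, of a "b + t"] by linarith
  show "integrable stdN (\<lambda>t. t * Hf c a (b + t))" "integrable stdN (\<lambda>t. Df c a (b + t))"
    "(\<integral>t. t * Hf c a (b + t) \<partial>stdN) = (\<integral>t. Df c a (b + t) \<partial>stdN)"
    using stein1[OF fin cont der Df_measurable Db Hb] by auto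
qed


lemma N_sq: "integrable stdN (\<lambda>t. t\<^sup>2)" "(\<integral>t. t\<^sup>2 \<partial>stdN) = 1"
proof -
  have h: "has_bochner_integral lborel (\<lambda>x. std_normal_density x * x ^ (2 * 1)) (fact (2 * 1) / (2^1 * fact 1))"
    by (rule std_normal_moment_even)
  have h': "has_bochner_integral lborel (\<lambda>x. std_normal_density x * x\<^sup>2) 1"
    using h by simp
  have i: "integrable lborel (\<lambda>x. std_normal_density x * x\<^sup>2)"
    using h' by (rule integrable.intros)
  have e: "(\<integral>x. std_normal_density x * x\<^sup>2 \<partial>lborel) = 1"
    using h' by (rule has_bochner_integral_integral_eq)
  show "integrable stdN (\<lambda>t. t\<^sup>2)" unfolding stdN_def
    by (subst integrable_density) (use i in auto)
  show "(\<integral>t. t\<^sup>2 \<partial>stdN) = 1" unfolding stdN_def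
    by (subst integral_density) (use e in auto)
qed

lemma N_sq_nn: "(\<integral>\<^sup>+ t. ennreal (t\<^sup>2) \<partial>stdN) = 1"
  using nn_integral_eq_integral[OF N_sq(1)] N_sq(2) by simp

lemma G_sq_nn: "(\<integral>\<^sup>+ z. ennreal ((z $ i)\<^sup>2) \<partial>(std_gauss :: (real^'n::finite) measure)) = 1"
proof -
  interpret G: prob_space "std_gauss :: (real^'n) measure" by (rule prob_G)
  have "(\<integral>\<^sup>+ z. ennreal ((z $ i)\<^sup>2) \<partial>(std_gauss :: (real^'n) measure))
      = (\<integral>\<^sup>+ z. (\<integral>\<^sup>+ t. ennreal ((vupd z i t $ i)\<^sup>2) \<partial>stdN) \<partial>std_gauss)"
    by (rule nn_resample) measurable
  also have "\<dots> = 1" by (simp add: N_sq_nn G.emeasure_space_1[simplified])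
  finally show ?thesis .
qed

lemma G_sq: "integrable (std_gauss :: (real^'n::finite) measure) (\<lambda>z. (z $ i)\<^sup>2)"
  "(\<integral>z. (z $ i)\<^sup>2 \<partial>(std_gauss :: (real^'n::finite) measure)) = 1"
proof -
  show i: "integrable (std_gauss :: (real^'n::finite) measure) (\<lambda>z. (z $ i)\<^sup>2)"
    by (rule integrableI_nn_integral_finite[where x=1]) (auto simp: G_sq_nn)
  show "(\<integral>z. (z $ i)\<^sup>2 \<partial>(std_gauss :: (real^'n::finite) measure)) = 1"
    by (subst integral_eq_nn_integral) (auto simp: G_sq_nn)
qed

lemma G_normsq: "integrable (std_gauss :: (real^'n::finite) measure) (\<lambda>z. (norm z)\<^sup>2)"
  unfolding norm_sq_vec by (rule Bochner_Integration.integrable_sum) (rule G_sq(1))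

lemma intG:
  fixes f :: "real^'n::finite \<Rightarrow> real"
  assumes [measurable]: "f \<in> borel_measurable borel"
    and b: "\<And>z. \<bar>f z\<bar> \<le> C + D * (norm z)\<^sup>2"
  shows "integrable std_gauss f"
proof -
  interpret G: prob_space "std_gauss :: (real^'n) measure" by (rule prob_G)
  show ?thesis
  proof (rule Bochner_Integration.integrable_bound[where f="\<lambda>z. C + D * (norm z)\<^sup>2"])
    show "integrable std_gauss (\<lambda>z. C + D * (norm (z::real^'n))\<^sup>2)"
      by (intro Bochner_Integration.integrable_add integrable_mult_right G_normsq) simp
    show "f \<in> borel_measurable std_gauss" by simp
    show "AE x in std_gauss. norm (f x) \<le> norm (C + D * (norm x)\<^sup>2)"
      using b by (auto intro: order_trans[OF _ abs_ge_self])
  qed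
qed

lemma prob_G_int_const[simp]: "(\<integral>z. c \<partial>(std_gauss :: (real^'n::finite) measure)) = (c::real)"
proof -
  have "(\<integral>z. c \<partial>(std_gauss :: (real^'n::finite) measure)) = measure std_gauss (space (std_gauss :: (real^'n::finite) measure)) *\<^sub>R c"
    by (rule lebesgue_integral_const)
  also have "measure std_gauss (space (std_gauss :: (real^'n::finite) measure)) = 1"
    by (rule prob_space.prob_space[OF prob_G])
  finally show ?thesis by simp
qed

definition Ai :: "real^'n::finite \<Rightarrow> 'n \<Rightarrow> real" where
  "Ai y i = (\<Sum>j\<in>UNIV - {i}. (y $ j)\<^sup>2)"

definition gC :: "real \<Rightarrow> real^'n::finite \<Rightarrow> 'n \<Rightarrow> real" where
  "gC c y i = - mm c ((norm y)\<^sup>2) * y $ i"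

definition DC :: "real \<Rightarrow> real^'n::finite \<Rightarrow> 'n \<Rightarrow> real" where
  "DC c y i = - mm c ((norm y)\<^sup>2) - 2 * mm' c ((norm y)\<^sup>2) * (y $ i)\<^sup>2"

lemma Ai_nonneg: "0 \<le> Ai y i"
  unfolding Ai_def by (intro sum_nonneg) auto

lemma norm_split: "(norm y)\<^sup>2 = Ai y i + (y $ i)\<^sup>2"
  unfolding norm_sq_vec Ai_def by (subst sum_remove_UNIV[of _ i]) simp

lemma gC_Hf: "gC c y i = Hf c (Ai y i) (y $ i)"
  unfolding gC_def Hf_def norm_split[of y i] ..

lemma DC_Df: "DC c y i = Df c (Ai y i) (y $ i)"
  unfolding DC_def Df_def norm_split[of y i] ..

lemma Ai_vupd: "Ai (\<mu> + vupd z i t) i = Ai (\<mu> + z) i"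
  unfolding Ai_def by (intro sum.cong) auto

lemma gC_measurable[measurable]: "(\<lambda>y. gC c y i) \<in> borel_measurable borel"
  unfolding gC_def by measurable

lemma DC_measurable[measurable]: "(\<lambda>y. DC c y i) \<in> borel_measurable borel"
  unfolding DC_def by measurable

lemma gC_bound: "0 < c \<Longrightarrow> \<bar>gC c y i\<bar> \<le> \<bar>y $ i\<bar>"
  unfolding gC_Hf by (rule Hf_bound)

lemma DC_bound: "0 < c \<Longrightarrow> \<bar>DC c y i\<bar> \<le> 3"
  unfolding DC_Df by (rule Df_bound[OF _ Ai_nonneg])

lemma stein_vec:
  fixes \<mu> :: "real^'n::finite"
  assumes c: "0 < c"
  shows "integrable std_gauss (\<lambda>z. z $ i * gC c (\<mu> + z) i)"
    "integrable std_gauss (\<lambda>z. DC c (\<mu> + z) i)"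
    "(\<integral>z. z $ i * gC c (\<mu> + z) i \<partial>std_gauss) = (\<integral>z. DC c (\<mu> + z) i \<partial>std_gauss)"
proof -
  show i1: "integrable std_gauss (\<lambda>z. z $ i * gC c (\<mu> + z) i)"
  proof (rule intG[where C="\<bar>\<mu> $ i\<bar>" and D="\<bar>\<mu> $ i\<bar> + 1"])
    show "(\<lambda>z. z $ i * gC c (\<mu> + z) i) \<in> borel_measurable borel" by measurable
    fix z :: "real^'n"
    have n: "\<bar>z $ i\<bar> \<le> norm z" by (rule component_le_norm_cart)
    have n1: "\<bar>z $ i\<bar> \<le> 1 + (norm z)\<^sup>2"
    proof (cases "norm z \<le> 1")
      case True
      have "0 \<le> (norm z)\<^sup>2" by simp
      then show ?thesis using n True by linarith
    next
      case False
      have "norm z * 1 \<le> norm z * norm z" using False by (intro mult_left_mono) auto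
      then have "norm z \<le> (norm z)\<^sup>2" by (simp add: power2_eq_square)
      then show ?thesis using n by linarith
    qed
    have n2: "(z $ i)\<^sup>2 \<le> (norm z)\<^sup>2"
      using n by (metis abs_ge_zero power2_abs power_mono)
    have "\<bar>z $ i * gC c (\<mu> + z) i\<bar> \<le> \<bar>z $ i\<bar> * \<bar>\<mu> $ i + z $ i\<bar>"
      unfolding abs_mult by (rule mult_left_mono) (use gC_bound[OF c, of "\<mu> + z" i] in auto)
    also have "\<dots> \<le> \<bar>z $ i\<bar> * \<bar>\<mu> $ i\<bar> + (z $ i)\<^sup>2"
    proof -
      have "\<bar>z $ i\<bar> * \<bar>\<mu> $ i + z $ i\<bar> \<le> \<bar>z $ i\<bar> * (\<bar>\<mu> $ i\<bar> + \<bar>z $ i\<bar>)"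
        by (rule mult_left_mono) (auto simp: abs_triangle_ineq)
      also have "\<dots> = \<bar>z $ i\<bar> * \<bar>\<mu> $ i\<bar> + (z $ i)\<^sup>2"
        by (simp add: algebra_simps power2_eq_square abs_mult_self_eq)
      finally show ?thesis .
    qed
    also have "\<dots> \<le> (1 + (norm z)\<^sup>2) * \<bar>\<mu> $ i\<bar> + (norm z)\<^sup>2"
      using n1 n2 by (intro add_mono mult_right_mono) auto
    also have "\<dots> = \<bar>\<mu> $ i\<bar> + (\<bar>\<mu> $ i\<bar> + 1) * (norm z)\<^sup>2" by (simp add: algebra_simps)
    finally show "\<bar>z $ i * gC c (\<mu> + z) i\<bar> \<le> \<bar>\<mu> $ i\<bar> + (\<bar>\<mu> $ i\<bar> + 1) * (norm z)\<^sup>2" .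
  qed
  show i2: "integrable std_gauss (\<lambda>z. DC c (\<mu> + z) i)"
    by (rule intG[where C=3 and D=0]) (use DC_bound[OF c] in auto)
  have "(\<integral>z. z $ i * gC c (\<mu> + z) i \<partial>std_gauss)
      = (\<integral>z. (\<integral>t. vupd z i t $ i * gC c (\<mu> + vupd z i t) i \<partial>stdN) \<partial>std_gauss)"
    by (rule resample[OF i1])
  also have "\<dots> = (\<integral>z. (\<integral>t. DC c (\<mu> + vupd z i t) i \<partial>stdN) \<partial>std_gauss)"
  proof (rule Bochner_Integration.integral_cong[OF refl])
    fix z :: "real^'n"
    have "(\<integral>t. vupd z i t $ i * gC c (\<mu> + vupd z i t) i \<partial>stdN)
        = (\<integral>t. t * Hf c (Ai (\<mu> + z) i) (\<mu> $ i + t) \<partial>stdN)"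
      unfolding gC_Hf Ai_vupd by simp
    also have "\<dots> = (\<integral>t. Df c (Ai (\<mu> + z) i) (\<mu> $ i + t) \<partial>stdN)"
      by (rule stein_shift(3)[OF c Ai_nonneg])
    also have "\<dots> = (\<integral>t. DC c (\<mu> + vupd z i t) i \<partial>stdN)"
      unfolding DC_Df Ai_vupd by simp
    finally show "(\<integral>t. vupd z i t $ i * gC c (\<mu> + vupd z i t) i \<partial>stdN)
        = (\<integral>t. DC c (\<mu> + vupd z i t) i \<partial>stdN)" .
  qed
  also have "\<dots> = (\<integral>z. DC c (\<mu> + z) i \<partial>std_gauss)"
    by (rule resample[OF i2, symmetric])
  finally show "(\<integral>z. z $ i * gC c (\<mu> + z) i \<partial>std_gauss) = (\<integral>z. DC c (\<mu> + z) i \<partial>std_gauss)" .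
qed


definition rho :: "real \<Rightarrow> real \<Rightarrow> real \<Rightarrow> real" where
  "rho c B t = (if t \<le> c then t - B else B - c\<^sup>2 / t)"

lemma rho_measurable[measurable]: "rho c B \<in> borel_measurable borel"
  unfolding rho_def by measurable

lemma js_coord:
  fixes y :: "real^'n::finite"
  assumes c: "c = real CARD('n) - 2" "0 < c"
  shows "js y $ i = y $ i + gC c y i"
proof (cases "y = 0")
  case True then show ?thesis by (simp add: js_def gC_def)
next
  case False
  let ?t = "(norm y)\<^sup>2"
  have tp: "0 < ?t" using False by simp
  have e: "max 0 (1 - c / ?t) = 1 - mm c ?t"
  proof (cases "?t \<le> c")
    case True
    have "1 \<le> c / ?t" using True tp by simp
    then show ?thesis using mm_le[OF c(2) True] by simp
  next
    case False
    then have "c / ?t < 1" using tp by simp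
    then show ?thesis using mm_gt[OF c(2)] False by simp
  qed
  have "js y $ i = (1 - mm c ?t) * y $ i"
    unfolding js_def c(1)[symmetric] e[symmetric] by simp
  then show ?thesis by (simp add: gC_def algebra_simps)
qed

lemma sum_identity:
  fixes y :: "real^'n::finite"
  assumes c: "c = real CARD('n) - 2" "0 < c"
  shows "(\<Sum>i\<in>UNIV. 1 + 2 * DC c y i + (gC c y i)\<^sup>2) = rho c (real CARD('n)) ((norm y)\<^sup>2)"
proof -
  let ?t = "(norm y)\<^sup>2"
  let ?B = "real CARD('n)"
  have s1: "(\<Sum>i\<in>UNIV. DC c y i) = - ?B * mm c ?t - 2 * mm' c ?t * ?t"
    unfolding DC_def norm_sq_vec[of y]
    by (simp add: sum.distrib sum_subtractf sum_distrib_left[symmetric] sum_negf)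
  have s2: "(\<Sum>i\<in>UNIV. (gC c y i)\<^sup>2) = (mm c ?t)\<^sup>2 * ?t"
    unfolding gC_def norm_sq_vec[of y]
    by (simp add: power_mult_distrib sum_distrib_left[symmetric])
  have "(\<Sum>i\<in>UNIV. 1 + 2 * DC c y i + (gC c y i)\<^sup>2) = ?B + 2 * (\<Sum>i\<in>UNIV. DC c y i) + (\<Sum>i\<in>UNIV. (gC c y i)\<^sup>2)"
    by (simp add: sum.distrib sum_distrib_left)
  also have "\<dots> = ?B + 2 * (- ?B * mm c ?t - 2 * mm' c ?t * ?t) + (mm c ?t)\<^sup>2 * ?t"
    unfolding s1 s2 ..
  also have "\<dots> = rho c ?B ?t"
  proof (cases "?t \<le> c")
    case True
    then show ?thesis unfolding rho_def mm'_def mm_le[OF c(2) True] by simp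
  next
    case False
    then have tc: "c < ?t" by simp
    have tp: "0 < ?t" using tc c(2) by linarith
    have "?B + 2 * (- ?B * (c / ?t) - 2 * (- c / ?t\<^sup>2) * ?t) + (c / ?t)\<^sup>2 * ?t = ?B - c\<^sup>2 / ?t"
    proof -
      have aux: "0 < T \<Longrightarrow> (c+2) + 2 * (- (c+2) * (c / T) - 2 * (- c / T\<^sup>2) * T) + (c / T)\<^sup>2 * T = (c+2) - c\<^sup>2 / T" for T
        by (simp add: field_simps power2_eq_square)
      have B: "?B = c + 2" using c(1) by simp
      show ?thesis unfolding B using aux[OF tp] .
    qed
    then show ?thesis unfolding rho_def mm'_def mm_gt[OF c(2) tc] using False by simp
  qed
  finally show ?thesis .
qed

lemma sq_sum_le: "(a + b)\<^sup>2 \<le> 2 * a\<^sup>2 + 2 * (b::real)\<^sup>2"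
proof -
  have "0 \<le> (a - b)\<^sup>2" by simp
  then have "0 \<le> a*a - 2*(a*b) + b*b" by (simp add: power2_eq_square algebra_simps)
  then show ?thesis unfolding power2_eq_square by (simp add: algebra_simps)
qed

lemma integrable_G_const[simp]: "integrable (std_gauss :: (real^'n::finite) measure) (\<lambda>x. c::real)"
proof -
  interpret G: prob_space "std_gauss :: (real^'n) measure" by (rule prob_G)
  show ?thesis by (rule G.integrable_const)
qed

lemma measure_G_UNIV[simp]: "measure (std_gauss :: (real^'n::finite) measure) UNIV = 1"
  using prob_space.prob_space[OF prob_G] by simp

lemma sure:
  fixes \<mu> :: "real^'n::finite"
  assumes c: "c = real CARD('n) - 2" "0 < c"
  shows "js_risk \<mu> = (\<integral>z. rho c (real CARD('n)) ((norm (\<mu> + z))\<^sup>2) \<partial>std_gauss)"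
proof -
  define g where "g i z = gC c (\<mu> + z) i" for i z
  define f where "f i z = (z $ i)\<^sup>2 + 2 * (z $ i * g i z) + (g i z)\<^sup>2" for i z
  define h where "h i z = 1 + 2 * DC c (\<mu> + z) i + (g i z)\<^sup>2" for i z
  have ig2: "integrable std_gauss (\<lambda>z. (g i z)\<^sup>2)" for i
  proof (rule intG[where C="2 * (\<mu> $ i)\<^sup>2" and D=2])
    show "(\<lambda>z. (g i z)\<^sup>2) \<in> borel_measurable borel" unfolding g_def by measurable
    fix z :: "real^'n"
    have "\<bar>g i z\<bar> \<le> \<bar>\<mu> $ i + z $ i\<bar>" unfolding g_def using gC_bound[OF c(2), of "\<mu> + z" i] by simp
    then have "(g i z)\<^sup>2 \<le> (\<mu> $ i + z $ i)\<^sup>2" by (metis abs_ge_zero power2_abs power_mono)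
    also have "\<dots> \<le> 2 * (\<mu> $ i)\<^sup>2 + 2 * (z $ i)\<^sup>2"
      by (rule sq_sum_le)
    also have "\<dots> \<le> 2 * (\<mu> $ i)\<^sup>2 + 2 * (norm z)\<^sup>2"
    proof -
      have "(z $ i)\<^sup>2 \<le> (norm z)\<^sup>2"
        using component_le_norm_cart[of z i] by (metis abs_ge_zero power2_abs power_mono)
      then show ?thesis by simp
    qed
    finally show "\<bar>(g i z)\<^sup>2\<bar> \<le> 2 * (\<mu> $ i)\<^sup>2 + 2 * (norm z)\<^sup>2" by simp
  qed
  have if1: "integrable std_gauss (f i)" for i
    unfolding f_def g_def
    by (intro Bochner_Integration.integrable_add integrable_mult_right G_sq(1) stein_vec(1)[OF c(2)])
       (use ig2 in \<open>simp add: g_def\<close>)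
  have ih: "integrable std_gauss (h i)" for i
    unfolding h_def
    by (intro Bochner_Integration.integrable_add integrable_mult_right stein_vec(2)[OF c(2)] ig2) simp
  have fh: "(\<integral>z. f i z \<partial>std_gauss) = (\<integral>z. h i z \<partial>std_gauss)" for i
  proof -
    have "(\<integral>z. f i z \<partial>std_gauss) = (\<integral>z. (z $ i)\<^sup>2 \<partial>std_gauss) + 2 * (\<integral>z. z $ i * g i z \<partial>std_gauss)
        + (\<integral>z. (g i z)\<^sup>2 \<partial>std_gauss)"
      unfolding f_def g_def using stein_vec(1)[OF c(2), of i \<mu>] G_sq(1)[of i] ig2[of i]
      by (simp add: g_def)
    also have "\<dots> = 1 + 2 * (\<integral>z. DC c (\<mu> + z) i \<partial>std_gauss) + (\<integral>z. (g i z)\<^sup>2 \<partial>std_gauss)"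
      unfolding g_def G_sq(2) stein_vec(3)[OF c(2)] ..
    also have "\<dots> = (\<integral>z. h i z \<partial>std_gauss)"
      unfolding h_def using stein_vec(2)[OF c(2), of \<mu> i] ig2[of i]
      by simp
    finally show ?thesis .
  qed
  have L: "(norm (js (\<mu> + z) - \<mu>))\<^sup>2 = (\<Sum>i\<in>UNIV. f i z)" for z
  proof -
    have "(norm (js (\<mu> + z) - \<mu>))\<^sup>2 = (\<Sum>i\<in>UNIV. ((js (\<mu> + z) - \<mu>) $ i)\<^sup>2)"
      by (rule norm_sq_vec)
    also have "\<dots> = (\<Sum>i\<in>UNIV. f i z)"
      unfolding f_def g_def by (intro sum.cong refl) (simp add: js_coord[OF c] power2_eq_square algebra_simps)
    finally show ?thesis .
  qed
  have "js_risk \<mu> = (\<integral>z. (\<Sum>i\<in>UNIV. f i z) \<partial>std_gauss)"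
    unfolding js_risk_def L ..
  also have "\<dots> = (\<Sum>i\<in>UNIV. (\<integral>z. f i z \<partial>std_gauss))"
    by (rule Bochner_Integration.integral_sum) (rule if1)
  also have "\<dots> = (\<Sum>i\<in>UNIV. (\<integral>z. h i z \<partial>std_gauss))"
    by (simp add: fh)
  also have "\<dots> = (\<integral>z. (\<Sum>i\<in>UNIV. h i z) \<partial>std_gauss)"
    by (rule Bochner_Integration.integral_sum[symmetric]) (rule ih)
  also have "\<dots> = (\<integral>z. rho c (real CARD('n)) ((norm (\<mu> + z))\<^sup>2) \<partial>std_gauss)"
    unfolding h_def g_def sum_identity[OF c] ..
  finally show ?thesis .
qed


definition Ef :: "real \<Rightarrow> real \<Rightarrow> real" where
  "Ef r w = exp (- r\<^sup>2 / 2) * cosh (r * w)"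

lemma Ef_pos: "0 < Ef r w"
  unfolding Ef_def by simp

lemma phi_shift: "std_normal_density (w - r) = std_normal_density w * exp (- r\<^sup>2 / 2) * exp (r * w)"
proof -
  have "- (w - r)\<^sup>2 / 2 = - w\<^sup>2 / 2 + - r\<^sup>2 / 2 + r * w"
    by (simp add: power2_eq_square field_simps)
  then have e: "exp (- (w - r)\<^sup>2 / 2) = exp (- w\<^sup>2 / 2) * exp (- r\<^sup>2 / 2) * exp (r * w)"
    by (simp only: exp_add)
  show ?thesis
    unfolding std_normal_density_def e by (simp add: mult_ac)
qed

lemma phi_even: "std_normal_density (- w) = std_normal_density w"
  unfolding std_normal_density_def by simp

lemma psi_Ef: "(std_normal_density (w - r) + std_normal_density (w + r)) / 2 = std_normal_density w * Ef r w"
proof -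
  have "std_normal_density (w + r) = std_normal_density w * exp (- r\<^sup>2 / 2) * exp (- (r * w))"
    using phi_shift[of w "- r"] by simp
  then show ?thesis
    unfolding phi_shift[of w r] Ef_def cosh_def by (simp add: field_simps)
qed

lemma cosh_prod: "2 * (cosh x * cosh y) = cosh (x + y) + cosh (x - (y::real))"
  by (simp add: cosh_add cosh_diff)

lemma cosh_ineq:
  fixes r1 r2 s w :: real
  assumes "0 \<le> r1" "r1 \<le> r2" "0 \<le> s" "s \<le> w"
  shows "cosh (r2 * s) * cosh (r1 * w) \<le> cosh (r2 * w) * cosh (r1 * s)"
proof -
  have p1: "0 \<le> (r2 - r1) * (w - s)" using assms by simp
  have p2: "0 \<le> (r2 + r1) * (w - s)" using assms by simp
  have p3: "0 \<le> (r2 - r1) * (w + s)" using assms by simp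
  have p4: "0 \<le> r2 * s" "0 \<le> r1 * w" using assms by auto
  have p5: "r1 * s \<le> r2 * w" using assms by (intro mult_mono) auto
  have p6: "0 \<le> r1 * s" using assms by simp
  have a1: "cosh (r2 * s + r1 * w) \<le> cosh (r2 * w + r1 * s)"
  proof (subst cosh_real_nonneg_le_iff)
    show "0 \<le> r2 * s + r1 * w" using p4 by simp
    show "0 \<le> r2 * w + r1 * s" using p4 p5 p6 by linarith
    show "r2 * s + r1 * w \<le> r2 * w + r1 * s" using p1 by (simp add: algebra_simps)
  qed
  have a2: "cosh (r2 * s - r1 * w) \<le> cosh (r2 * w - r1 * s)"
  proof -
    have "cosh (r2 * s - r1 * w) = cosh \<bar>r2 * s - r1 * w\<bar>" by simp
    also have "\<dots> \<le> cosh (r2 * w - r1 * s)"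
    proof (subst cosh_real_nonneg_le_iff)
      show "0 \<le> \<bar>r2 * s - r1 * w\<bar>" by simp
      show "0 \<le> r2 * w - r1 * s" using p5 by simp
      show "\<bar>r2 * s - r1 * w\<bar> \<le> r2 * w - r1 * s"
        using p2 p3 by (simp add: algebra_simps abs_le_iff)
    qed
    finally show ?thesis .
  qed
  have "2 * (cosh (r2 * s) * cosh (r1 * w)) \<le> 2 * (cosh (r2 * w) * cosh (r1 * s))"
    unfolding cosh_prod using a1 a2 by simp
  then show ?thesis by simp
qed

lemma Ef_down:
  assumes r: "0 \<le> r1" "r1 \<le> r2" and sw: "\<bar>s\<bar> \<le> \<bar>w\<bar>" and le: "Ef r2 w \<le> Ef r1 w"
  shows "Ef r2 s \<le> Ef r1 s"
proof -
  have abs_eq: "Ef r x = Ef r \<bar>x\<bar>" if "0 \<le> r" for r x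
  proof -
    have "cosh (r * x) = cosh \<bar>r * x\<bar>" by simp
    also have "\<bar>r * x\<bar> = r * \<bar>x\<bar>" using that by (simp add: abs_mult)
    finally show ?thesis unfolding Ef_def by simp
  qed
  have r2: "0 \<le> r2" using r by simp
  have ci: "cosh (r2 * \<bar>s\<bar>) * cosh (r1 * \<bar>w\<bar>) \<le> cosh (r2 * \<bar>w\<bar>) * cosh (r1 * \<bar>s\<bar>)"
    by (rule cosh_ineq) (use r sw in auto)
  have "Ef r2 \<bar>s\<bar> * Ef r1 \<bar>w\<bar> = exp (- r2\<^sup>2 / 2) * exp (- r1\<^sup>2 / 2) * (cosh (r2 * \<bar>s\<bar>) * cosh (r1 * \<bar>w\<bar>))"
    unfolding Ef_def by (simp add: mult_ac)
  also have "\<dots> \<le> exp (- r2\<^sup>2 / 2) * exp (- r1\<^sup>2 / 2) * (cosh (r2 * \<bar>w\<bar>) * cosh (r1 * \<bar>s\<bar>))"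
    by (rule mult_left_mono[OF ci]) simp
  also have "\<dots> = Ef r2 \<bar>w\<bar> * Ef r1 \<bar>s\<bar>"
    unfolding Ef_def by (simp add: mult_ac)
  also have "\<dots> \<le> Ef r1 \<bar>w\<bar> * Ef r1 \<bar>s\<bar>"
    using le abs_eq[OF r2, of w] abs_eq[OF r(1), of w] Ef_pos[of r1 "\<bar>s\<bar>"]
    by (intro mult_right_mono) auto
  finally have "Ef r2 \<bar>s\<bar> * Ef r1 \<bar>w\<bar> \<le> Ef r1 \<bar>s\<bar> * Ef r1 \<bar>w\<bar>" by (simp add: mult_ac)
  then have "Ef r2 \<bar>s\<bar> \<le> Ef r1 \<bar>s\<bar>"
    using Ef_pos[of r1 "\<bar>w\<bar>"] by (simp add: mult_le_cancel_right)
  then show ?thesis using abs_eq[OF r2, of s] abs_eq[OF r(1), of s] by simp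
qed

lemma Ef_zero: "0 \<le> r1 \<Longrightarrow> r1 \<le> r2 \<Longrightarrow> Ef r2 0 \<le> Ef r1 0"
  unfolding Ef_def by (simp add: power_mono)

lemma int_phi_shift: "integrable lborel (\<lambda>w. std_normal_density (w - r))"
proof -
  have "(\<lambda>w. std_normal_density (w - r)) = normal_density r 1"
    by (rule ext) (simp add: normal_density_def)
  then show ?thesis by simp
qed

lemma int_phi_shift_int: "(\<integral>w. std_normal_density (w - r) \<partial>lborel) = 1"
proof -
  have "(\<lambda>w. std_normal_density (w - r)) = normal_density r 1"
    by (rule ext) (simp add: normal_density_def)
  then show ?thesis by simp
qed

lemma int_phiE: "integrable lborel (\<lambda>w. std_normal_density w * Ef r w)"
proof -
  have "integrable lborel (\<lambda>w. (std_normal_density (w - r) + std_normal_density (w + r)) / 2)"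
    using int_phi_shift[of r] int_phi_shift[of "- r"] by simp
  then show ?thesis unfolding psi_Ef .
qed

lemma int_phiE_1: "(\<integral>w. std_normal_density w * Ef r w \<partial>lborel) = 1"
proof -
  have "(\<integral>w. std_normal_density w * Ef r w \<partial>lborel)
      = (\<integral>w. (std_normal_density (w - r) + std_normal_density (w + r)) / 2 \<partial>lborel)"
    unfolding psi_Ef ..
  also have "\<dots> = ((\<integral>w. std_normal_density (w - r) \<partial>lborel) + (\<integral>w. std_normal_density (w - - r) \<partial>lborel)) / 2"
    using int_phi_shift[of r] int_phi_shift[of "- r"] by simp
  also have "\<dots> = 1" unfolding int_phi_shift_int by simp
  finally show ?thesis .
qed

lemma Ef_measurable[measurable]: "Ef r \<in> borel_measurable borel"
  unfolding Ef_def by (intro borel_measurable_continuous_onI continuous_intros)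

lemma rep1:
  fixes k :: "real \<Rightarrow> real"
  assumes km[measurable]: "k \<in> borel_measurable borel"
    and kb: "\<And>u. 0 \<le> u \<Longrightarrow> \<bar>k u\<bar> \<le> K"
  shows "integrable lborel (\<lambda>w. k (w\<^sup>2) * (std_normal_density w * Ef r w))"
    "(\<integral>t. k ((r + t)\<^sup>2) \<partial>stdN) = (\<integral>w. k (w\<^sup>2) * (std_normal_density w * Ef r w) \<partial>lborel)"
proof -
  have bnd: "\<And>f. integrable lborel f \<Longrightarrow> (\<And>w. 0 \<le> f w) \<Longrightarrow> f \<in> borel_measurable borel \<Longrightarrow>
      integrable lborel (\<lambda>w. k (w\<^sup>2) * f w)"
  proof -
    fix f :: "real \<Rightarrow> real" assume f: "integrable lborel f" "\<And>w. 0 \<le> f w" and [measurable]: "f \<in> borel_measurable borel"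
    show "integrable lborel (\<lambda>w. k (w\<^sup>2) * f w)"
    proof (rule Bochner_Integration.integrable_bound[where f="\<lambda>w. K * f w"])
      show "integrable lborel (\<lambda>w. K * f w)" using f by simp
      show "(\<lambda>w. k (w\<^sup>2) * f w) \<in> borel_measurable lborel" by simp
      show "AE w in lborel. norm (k (w\<^sup>2) * f w) \<le> norm (K * f w)"
      proof (rule AE_I2)
        fix w
        have "\<bar>k (w\<^sup>2)\<bar> * f w \<le> K * f w" by (rule mult_right_mono[OF kb f(2)]) simp
        also have "\<dots> \<le> \<bar>K * f w\<bar>" by simp
        finally show "norm (k (w\<^sup>2) * f w) \<le> norm (K * f w)" using f(2)[of w] by (simp add: abs_mult)
      qed
    qed
  qed
  have ia: "integrable lborel (\<lambda>w. k (w\<^sup>2) * std_normal_density (w - r))"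
    by (rule bnd[OF int_phi_shift]) auto
  have ib: "integrable lborel (\<lambda>w. k (w\<^sup>2) * std_normal_density (w + r))"
    using bnd[OF int_phi_shift[of "- r"]] by simp
  show "integrable lborel (\<lambda>w. k (w\<^sup>2) * (std_normal_density w * Ef r w))"
    by (rule bnd[OF int_phiE]) (auto intro!: mult_nonneg_nonneg less_imp_le[OF Ef_pos])
  have I0: "(\<integral>t. k ((r + t)\<^sup>2) \<partial>stdN) = (\<integral>t. std_normal_density t * k ((r + t)\<^sup>2) \<partial>lborel)"
    unfolding stdN_def by (subst integral_density) auto
  have Ia: "(\<integral>w. k (w\<^sup>2) * std_normal_density (w - r) \<partial>lborel) = (\<integral>t. std_normal_density t * k ((r + t)\<^sup>2) \<partial>lborel)"
    using lborel_integral_real_affine[of 1 "\<lambda>w. k (w\<^sup>2) * std_normal_density (w - r)" r]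
    by (simp add: mult_ac)
  have Ib: "(\<integral>w. k (w\<^sup>2) * std_normal_density (w + r) \<partial>lborel) = (\<integral>t. std_normal_density t * k ((r + t)\<^sup>2) \<partial>lborel)"
  proof -
    have "(\<integral>w. k (w\<^sup>2) * std_normal_density (w + r) \<partial>lborel)
        = (\<integral>x. k ((- r + - 1 * x)\<^sup>2) * std_normal_density ((- r + - 1 * x) + r) \<partial>lborel)"
      using lborel_integral_real_affine[of "-1" "\<lambda>w. k (w\<^sup>2) * std_normal_density (w + r)" "- r"]
      by simp
    also have "\<dots> = (\<integral>t. std_normal_density t * k ((r + t)\<^sup>2) \<partial>lborel)"
    proof (rule Bochner_Integration.integral_cong[OF refl])
      fix x
      have "(- r + - 1 * x)\<^sup>2 = (r + x)\<^sup>2" by (simp add: power2_eq_square algebra_simps)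
      moreover have "std_normal_density ((- r + - 1 * x) + r) = std_normal_density x"
        using phi_even[of x] by simp
      ultimately show "k ((- r + - 1 * x)\<^sup>2) * std_normal_density ((- r + - 1 * x) + r) = std_normal_density x * k ((r + x)\<^sup>2)"
        by simp
    qed
    finally show ?thesis .
  qed
  have "(\<integral>w. k (w\<^sup>2) * (std_normal_density w * Ef r w) \<partial>lborel)
      = (\<integral>w. (k (w\<^sup>2) * std_normal_density (w - r) + k (w\<^sup>2) * std_normal_density (w + r)) / 2 \<partial>lborel)"
    unfolding psi_Ef[symmetric] by (simp add: algebra_simps add_divide_distrib)
  also have "\<dots> = ((\<integral>w. k (w\<^sup>2) * std_normal_density (w - r) \<partial>lborel) + (\<integral>w. k (w\<^sup>2) * std_normal_density (w + r) \<partial>lborel)) / 2"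
    using ia ib by simp
  also have "\<dots> = (\<integral>t. k ((r + t)\<^sup>2) \<partial>stdN)"
    unfolding Ia Ib I0 by simp
  finally show "(\<integral>t. k ((r + t)\<^sup>2) \<partial>stdN) = (\<integral>w. k (w\<^sup>2) * (std_normal_density w * Ef r w) \<partial>lborel)" ..
qed

lemma mono1:
  fixes k :: "real \<Rightarrow> real"
  assumes km[measurable]: "k \<in> borel_measurable borel"
    and kmono: "\<And>u v. 0 \<le> u \<Longrightarrow> u \<le> v \<Longrightarrow> k u \<le> k v"
    and kb: "\<And>u. 0 \<le> u \<Longrightarrow> \<bar>k u\<bar> \<le> K"
    and r: "0 \<le> r1" "r1 \<le> r2"
  shows "(\<integral>t. k ((r1 + t)\<^sup>2) \<partial>stdN) \<le> (\<integral>t. k ((r2 + t)\<^sup>2) \<partial>stdN)"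
proof -
  define S where "S = {w. Ef r2 w \<le> Ef r1 w}"
  define Ks where "Ks = (SUP w\<in>S. k (w\<^sup>2))"
  have S0: "0 \<in> S" unfolding S_def using Ef_zero[OF r] by simp
  have bdd: "bdd_above ((\<lambda>w. k (w\<^sup>2)) ` S)"
    by (rule bdd_aboveI[where M=K]) (use kb in \<open>auto simp: abs_le_iff\<close>)
  have pw: "0 \<le> (k (w\<^sup>2) - Ks) * (std_normal_density w * (Ef r2 w - Ef r1 w))" for w
  proof (cases "w \<in> S")
    case True
    have "k (w\<^sup>2) \<le> Ks" unfolding Ks_def by (rule cSUP_upper[OF True bdd])
    moreover have "std_normal_density w * (Ef r2 w - Ef r1 w) \<le> 0"
      using True unfolding S_def by (simp add: mult_nonneg_nonpos)
    ultimately show ?thesis by (simp add: mult_nonpos_nonpos)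
  next
    case False
    have "Ks \<le> k (w\<^sup>2)" unfolding Ks_def
    proof (rule cSUP_least)
      show "S \<noteq> {}" using S0 by auto
      fix s assume s: "s \<in> S"
      have "\<bar>s\<bar> < \<bar>w\<bar>"
      proof (rule ccontr)
        assume "\<not> \<bar>s\<bar> < \<bar>w\<bar>"
        then have "\<bar>w\<bar> \<le> \<bar>s\<bar>" by simp
        from Ef_down[OF r this] s have "w \<in> S" unfolding S_def by simp
        with False show False by simp
      qed
      then have "s\<^sup>2 \<le> w\<^sup>2" by (metis abs_ge_zero less_imp_le power2_abs power_mono)
      then show "k (s\<^sup>2) \<le> k (w\<^sup>2)" by (intro kmono) auto
    qed
    moreover have "0 \<le> std_normal_density w * (Ef r2 w - Ef r1 w)"
      using False unfolding S_def by simp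
    ultimately show ?thesis by simp
  qed
  have i1: "integrable lborel (\<lambda>w. k (w\<^sup>2) * (std_normal_density w * Ef r1 w))"
    by (rule rep1(1)[OF km kb])
  have i2: "integrable lborel (\<lambda>w. k (w\<^sup>2) * (std_normal_density w * Ef r2 w))"
    by (rule rep1(1)[OF km kb])
  have "(\<integral>t. k ((r2 + t)\<^sup>2) \<partial>stdN) - (\<integral>t. k ((r1 + t)\<^sup>2) \<partial>stdN)
      = (\<integral>w. k (w\<^sup>2) * (std_normal_density w * Ef r2 w) \<partial>lborel) - (\<integral>w. k (w\<^sup>2) * (std_normal_density w * Ef r1 w) \<partial>lborel)"
    using rep1(2)[OF km kb, of r1] rep1(2)[OF km kb, of r2] by simp
  also have "\<dots> = (\<integral>w. (k (w\<^sup>2) - Ks) * (std_normal_density w * (Ef r2 w - Ef r1 w)) \<partial>lborel)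
       + Ks * ((\<integral>w. std_normal_density w * Ef r2 w \<partial>lborel) - (\<integral>w. std_normal_density w * Ef r1 w \<partial>lborel))"
  proof -
    have e: "(\<lambda>w. (k (w\<^sup>2) - Ks) * (std_normal_density w * (Ef r2 w - Ef r1 w)))
      = (\<lambda>w. (k (w\<^sup>2) * (std_normal_density w * Ef r2 w) - k (w\<^sup>2) * (std_normal_density w * Ef r1 w))
          - (Ks * (std_normal_density w * Ef r2 w) - Ks * (std_normal_density w * Ef r1 w)))"
      by (rule ext) (simp add: algebra_simps)
    show ?thesis unfolding e
      using i1 i2 int_phiE[of r1] int_phiE[of r2] by (simp add: algebra_simps)
  qed
  also have "\<dots> = (\<integral>w. (k (w\<^sup>2) - Ks) * (std_normal_density w * (Ef r2 w - Ef r1 w)) \<partial>lborel)"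
    unfolding int_phiE_1 by simp
  also have "\<dots> \<ge> 0"
    by (rule integral_nonneg_AE) (use pw in auto)
  finally show ?thesis by simp
qed


lemma rho_bound:
  assumes c: "c = B - 2" "0 < c" and t: "0 \<le> t"
  shows "\<bar>rho c B t\<bar> \<le> B"
proof (cases "t \<le> c")
  case True then show ?thesis unfolding rho_def using c t by auto
next
  case False
  then have tc: "c < t" by simp
  have tp: "0 < t" using tc c by linarith
  have "c\<^sup>2 / t \<le> c"
  proof -
    have "c * c \<le> c * t" using tc c by (intro mult_left_mono) auto
    then show ?thesis using tp by (simp add: power2_eq_square divide_le_eq)
  qed
  moreover have "0 \<le> c\<^sup>2 / t" using tp by simp
  ultimately show ?thesis unfolding rho_def using False c by auto
qed

lemma rho_mono:
  assumes c: "c = B - 2" "0 < c" and xy: "0 \<le> x" "x \<le> y"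
  shows "rho c B x \<le> rho c B y"
proof -
  have lt: "c\<^sup>2 / t < c" if "c < t" for t
  proof -
    have tp: "0 < t" using that c by linarith
    have "c * c < c * t" using that c by (intro mult_strict_left_mono) auto
    then show ?thesis using tp by (simp add: power2_eq_square divide_less_eq)
  qed
  show ?thesis
  proof (cases "y \<le> c")
    case True then show ?thesis unfolding rho_def using xy by auto
  next
    case False
    then have yc: "c < y" by simp
    show ?thesis
    proof (cases "x \<le> c")
      case True
      then show ?thesis unfolding rho_def using False lt[OF yc] c by auto
    next
      case False
      then have xc: "c < x" by simp
      have "c\<^sup>2 / y \<le> c\<^sup>2 / x"
        using xc yc c xy by (intro divide_left_mono) auto
      then show ?thesis unfolding rho_def using False \<open>\<not> y \<le> c\<close> by auto
    qed
  qed
qed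

theorem mainTheorem7:
  assumes "CARD('n::finite) \<ge> 3"
  shows "\<exists>g :: real \<Rightarrow> real. mono_on {0..} g \<and>
           (\<forall>\<mu> :: real ^ 'n. js_risk \<mu> = g (norm \<mu>))"
proof -
  define k :: 'n where "k = undefined"
  define e :: "real^'n" where "e = axis k 1"
  define g where "g r = js_risk (r *\<^sub>R e)" for r
  define c where "c = real CARD('n) - 2"
  define B where "B = real CARD('n)"
  have cpos: "0 < c" using assms unfolding c_def by simp
  have cB: "c = B - 2" unfolding c_def B_def ..
  have rad: "\<forall>\<mu> :: real ^ 'n. js_risk \<mu> = g (norm \<mu>)"
    unfolding g_def e_def using js_risk_radial by blast
  interpret N: prob_space stdN by (rule prob_stdN)
  have rep: "g r = (\<integral>z. (\<integral>t. rho c B (Ai z k + (r + t)\<^sup>2) \<partial>stdN) \<partial>std_gauss)" for r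
  proof -
    have m[measurable]: "(\<lambda>z::real^'n. rho c B ((norm (r *\<^sub>R e + z))\<^sup>2)) \<in> borel_measurable borel"
      by measurable
    have i: "integrable std_gauss (\<lambda>z::real^'n. rho c B ((norm (r *\<^sub>R e + z))\<^sup>2))"
      by (rule intG[where C=B and D=0]) (use rho_bound[OF cB cpos] in auto)
    have "g r = (\<integral>z. rho c B ((norm (r *\<^sub>R e + z))\<^sup>2) \<partial>std_gauss)"
      unfolding g_def B_def by (rule sure[OF c_def cpos])
    also have "\<dots> = (\<integral>z. (\<integral>t. rho c B ((norm (r *\<^sub>R e + vupd z k t))\<^sup>2) \<partial>stdN) \<partial>std_gauss)"
      by (rule resample[OF i])
    also have "\<dots> = (\<integral>z. (\<integral>t. rho c B (Ai z k + (r + t)\<^sup>2) \<partial>stdN) \<partial>std_gauss)"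
    proof -
      have "(norm (r *\<^sub>R e + vupd z k t))\<^sup>2 = Ai z k + (r + t)\<^sup>2" for z t
      proof -
        have A1: "Ai (r *\<^sub>R e + vupd z k t) k = Ai z k"
          unfolding Ai_def e_def by (intro sum.cong) (auto simp: axis_def)
        have A2: "(r *\<^sub>R e + vupd z k t) $ k = r + t"
          unfolding e_def by (simp add: axis_def)
        show ?thesis by (simp only: norm_split[of "r *\<^sub>R e + vupd z k t" k] A1 A2)
      qed
      then show ?thesis by simp
    qed
    finally show ?thesis .
  qed
  have mono: "mono_on {0..} g"
  proof (rule mono_onI)
    fix r1 r2 :: real assume r: "r1 \<in> {0..}" "r2 \<in> {0..}" "r1 \<le> r2"
    define F where "F r z = (\<integral>t. rho c B (Ai z k + (r + t)\<^sup>2) \<partial>stdN)" for r and z :: "real^'n"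
    have Fm: "F r \<in> borel_measurable std_gauss" for r
    proof -
      have h: "(\<lambda>z::real^'n. rho c B ((norm (r *\<^sub>R e + z))\<^sup>2)) \<in> borel_measurable borel"
        by measurable
      have "(\<lambda>p. rho c B ((norm (r *\<^sub>R e + fst (Phi k p)))\<^sup>2)) \<in> borel_measurable (std_gauss \<Otimes>\<^sub>M stdN)"
        by (rule meas_GN[OF meas_fst_Phi[OF h]])
      moreover have "(\<lambda>p. rho c B ((norm (r *\<^sub>R e + fst (Phi k p)))\<^sup>2)) = (\<lambda>(z, t). rho c B (Ai z k + (r + t)\<^sup>2))"
      proof (rule ext, clarify)
        fix z :: "real^'n" and t :: real
        have A1: "Ai (r *\<^sub>R e + vupd z k t) k = Ai z k"
          unfolding Ai_def e_def by (intro sum.cong) (auto simp: axis_def)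
        have A2: "(r *\<^sub>R e + vupd z k t) $ k = r + t"
          unfolding e_def by (simp add: axis_def)
        have A3: "fst (Phi k (z, t)) = vupd z k t" by (simp add: Phi_def)
        show "rho c B ((norm (r *\<^sub>R e + fst (Phi k (z, t))))\<^sup>2) = rho c B (Ai z k + (r + t)\<^sup>2)"
          by (simp only: A3 norm_split[of "r *\<^sub>R e + vupd z k t" k] A1 A2)
      qed
      ultimately have "(\<lambda>(z, t). rho c B (Ai z k + (r + t)\<^sup>2)) \<in> borel_measurable (std_gauss \<Otimes>\<^sub>M stdN)"
        by simp
      then show ?thesis unfolding F_def by (rule N.borel_measurable_lebesgue_integral)
    qed
    have Fb: "\<bar>F r z\<bar> \<le> B" for r z
    proof -
      have "\<bar>F r z\<bar> \<le> (\<integral>t. \<bar>rho c B (Ai z k + (r + t)\<^sup>2)\<bar> \<partial>stdN)"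
        unfolding F_def by (rule integral_abs_bound)
      also have "\<dots> \<le> (\<integral>t. B \<partial>stdN)"
      proof (rule integral_mono)
        show "integrable stdN (\<lambda>t. B)" by simp
        show "\<bar>rho c B (Ai z k + (r + t)\<^sup>2)\<bar> \<le> B" for t
          by (rule rho_bound[OF cB cpos]) (simp add: Ai_nonneg add_nonneg_nonneg)
        show "integrable stdN (\<lambda>t. \<bar>rho c B (Ai z k + (r + t)\<^sup>2)\<bar>)"
        proof (rule Bochner_Integration.integrable_bound[where f="\<lambda>t. B"])
          show "integrable stdN (\<lambda>t. B)" by simp
          show "(\<lambda>t. \<bar>rho c B (Ai z k + (r + t)\<^sup>2)\<bar>) \<in> borel_measurable stdN" by measurable
          show "AE t in stdN. norm \<bar>rho c B (Ai z k + (r + t)\<^sup>2)\<bar> \<le> norm B"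
          proof (rule AE_I2)
            fix t
            have "\<bar>rho c B (Ai z k + (r + t)\<^sup>2)\<bar> \<le> B"
              by (rule rho_bound[OF cB cpos]) (simp add: Ai_nonneg add_nonneg_nonneg)
            then show "norm \<bar>rho c B (Ai z k + (r + t)\<^sup>2)\<bar> \<le> norm B" by simp
          qed
        qed
      qed
      also have "\<dots> = B" by simp
      finally show ?thesis .
    qed
    have Fi: "integrable std_gauss (F r)" for r
    proof -
      interpret G: prob_space "std_gauss :: (real^'n) measure" by (rule prob_G)
      show ?thesis
      proof (rule Bochner_Integration.integrable_bound[where f="\<lambda>z. B"])
        show "integrable std_gauss (\<lambda>z::real^'n. B)" by simp
        show "F r \<in> borel_measurable std_gauss" by (rule Fm)
        show "AE x in std_gauss. norm (F r x) \<le> norm B"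
          using Fb by (auto intro: order_trans[OF _ abs_ge_self])
      qed
    qed
    have "g r1 = (\<integral>z. F r1 z \<partial>std_gauss)" unfolding rep F_def ..
    also have "\<dots> \<le> (\<integral>z. F r2 z \<partial>std_gauss)"
    proof (rule integral_mono[OF Fi Fi])
      fix z :: "real^'n"
      show "F r1 z \<le> F r2 z" unfolding F_def
      proof (rule mono1[where K=B])
        show "(\<lambda>u. rho c B (Ai z k + u)) \<in> borel_measurable borel" by measurable
        show "rho c B (Ai z k + u) \<le> rho c B (Ai z k + v)" if "0 \<le> u" "u \<le> v" for u v
          by (rule rho_mono[OF cB cpos]) (use that Ai_nonneg[of z k] in auto)
        show "\<bar>rho c B (Ai z k + u)\<bar> \<le> B" if "0 \<le> u" for u
          by (rule rho_bound[OF cB cpos]) (use that Ai_nonneg[of z k] in auto)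
      qed (use r in auto)
    qed
    also have "\<dots> = g r2" unfolding rep F_def ..
    finally show "g r1 \<le> g r2" .
  qed
  show ?thesis using mono rad by blast
qed


end
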